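(* Let $q$ be a prime power, let $\lambda \in \mathbb{F}_{q^n}\setminus\mathbb{F}_q$, $t = [\mathbb{F}_q(\lambda):\mathbb{F}_q]$, let $\overline{S}$ be an $\mathbb{F}_{q^t}$-subspace of $\mathbb{F}_{q^n}$ of $\mathbb{F}_{q^t}$-dimension $l>0$, $b \in \mathbb{F}_{q^n}^*$ with $\mathbb{F}_{q^t}\cap b\overline{S}=\{0\}$, $0<m<t$, $k = tl+m$ with $t+1 \le k \le n$, and $S = \overline{S} \oplus b\langle 1, \lambda, \ldots, \lambda^{m-1}\rangle_{\mathbb{F}_q}$, with $Y=\langle S\rangle_{\mathbb{F}_{q^t}} = \mathbb{F}_{q^n}$ and $2m \ge t-1$. Suppose $\mathcal{C}=\mathrm{Orb}(S)$ is an $r$-FWS code with $r = 2m+t(l-1)$, and that $r = tl-1$ (i.e. $2m = t-1$). Then \[ \omega_{2i}(\mathcal{C}) = \begin{cases} (q + 1)q^{2i-1}, & \text{if } i \in \{1, \ldots, m - 1\}, \\ \frac{q^t - q^{2m-1}}{q - 1}, & \text{if } i = m, \\ \frac{q^n - q^t}{q - 1}, & \text{if } i = m + 1. \end{cases} \]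
   Context: $\mathrm{Orb}(S)=\{\alpha S:\alpha\in\mathbb{F}_{q^n}^*\}$; $d(U,V)=2k-2\dim_{\mathbb{F}_q}(U\cap V)$; the weight distribution is $\omega_{2i}(\mathcal{C})=|\{\alpha S: \alpha\in\mathbb{F}_{q^n}^*, d(S,\alpha S)=2i\}|$ for $i=1,\dots,k$. $\mathcal{C}$ is an $r$-FWS code if $\omega_{2i}=0$ for $i=k-r+1,\ldots,k$ and $\omega_{2i}\neq 0$ for all $i=1,\ldots,k-r$. $\langle S\rangle_{\mathbb{F}_{q^t}}$ denotes the $\mathbb{F}_{q^t}$-span of $S$. *)

theory Defs
  imports Complex_Main "HOL-Computational_Algebra.Primes"
begin

text \<open>Finite field F_{q^n} is modelled as a finite field type 'a; subfields and
  subspaces over a subfield K are subsets of 'a.\<close>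

definition is_subfield :: "'a::field set \<Rightarrow> bool" where
  "is_subfield F \<longleftrightarrow> 0 \<in> F \<and> 1 \<in> F \<and> (\<forall>x\<in>F. \<forall>y\<in>F. x + y \<in> F \<and> x * y \<in> F)
     \<and> (\<forall>x\<in>F. - x \<in> F) \<and> (\<forall>x\<in>F. x \<noteq> 0 \<longrightarrow> inverse x \<in> F)"

definition field_adjoin :: "'a::field set \<Rightarrow> 'a \<Rightarrow> 'a set" where
  "field_adjoin K a = \<Inter>{F. is_subfield F \<and> K \<subseteq> F \<and> a \<in> F}"

definition is_subspace :: "'a::field set \<Rightarrow> 'a set \<Rightarrow> bool" where
  "is_subspace K V \<longleftrightarrow> 0 \<in> V \<and> (\<forall>x\<in>V. \<forall>y\<in>V. x + y \<in> V) \<and> (\<forall>c\<in>K. \<forall>x\<in>V. c * x \<in> V)"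

definition span_over :: "'a::field set \<Rightarrow> 'a set \<Rightarrow> 'a set" where
  "span_over K A = {(\<Sum>a\<in>B. c a * a) | B c. finite B \<and> B \<subseteq> A \<and> (\<forall>a\<in>B. c a \<in> K)}"

definition indep_over :: "'a::field set \<Rightarrow> 'a set \<Rightarrow> bool" where
  "indep_over K B \<longleftrightarrow> (\<forall>c. (\<forall>b\<in>B. c b \<in> K) \<longrightarrow> (\<Sum>b\<in>B. c b * b) = 0 \<longrightarrow> (\<forall>b\<in>B. c b = 0))"

definition dim_over :: "'a::field set \<Rightarrow> 'a set \<Rightarrow> nat" where
  "dim_over K V = (THE d. \<exists>B. B \<subseteq> V \<and> finite B \<and> indep_over K B \<and> span_over K B = V \<and> card B = d)"

definition Orb :: "'a::field set \<Rightarrow> 'a set set" where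
  "Orb S = {(\<lambda>x. \<alpha> * x) ` S | \<alpha>. \<alpha> \<noteq> 0}"

definition subspace_dist :: "'a::field set \<Rightarrow> nat \<Rightarrow> 'a set \<Rightarrow> 'a set \<Rightarrow> nat" where
  "subspace_dist K k U V = 2 * k - 2 * dim_over K (U \<inter> V)"

text \<open>omega_{2i}(Orb S) = number of orbit elements alpha S with d(S, alpha S) = 2i.\<close>
definition weight :: "'a::field set \<Rightarrow> nat \<Rightarrow> 'a set \<Rightarrow> nat \<Rightarrow> nat" where
  "weight K k S i = card {V \<in> Orb S. subspace_dist K k S V = 2 * i}"

definition is_FWS :: "'a::field set \<Rightarrow> nat \<Rightarrow> 'a set \<Rightarrow> nat \<Rightarrow> bool" where
  "is_FWS K k S r \<longleftrightarrow> (\<forall>i\<in>{k - r + 1..k}. weight K k S i = 0) \<and> (\<forall>i\<in>{1..k - r}. weight K k S i \<noteq> 0)"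

end

theory Submission
  imports Defs "HOL-Computational_Algebra.Polynomial" "HOL-Library.FuncSet"
begin

context fixes K :: "'a::{field,finite} set" assumes sf: "is_subfield K"
begin
lemma sf_0: "0 \<in> K" using sf unfolding is_subfield_def by auto
lemma sf_1: "1 \<in> K" using sf unfolding is_subfield_def by auto
lemma sf_add: "x \<in> K \<Longrightarrow> y \<in> K \<Longrightarrow> x + y \<in> K" using sf unfolding is_subfield_def by auto
lemma sf_mult: "x \<in> K \<Longrightarrow> y \<in> K \<Longrightarrow> x * y \<in> K" using sf unfolding is_subfield_def by auto
lemma sf_uminus: "x \<in> K \<Longrightarrow> - x \<in> K" using sf unfolding is_subfield_def by auto
lemma sf_inverse: "x \<in> K \<Longrightarrow> inverse x \<in> K"
  using sf unfolding is_subfield_def by (cases "x = 0") auto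
lemma sf_diff: "x \<in> K \<Longrightarrow> y \<in> K \<Longrightarrow> x - y \<in> K"
  using sf_add[of x "-y"] sf_uminus[of y] by simp
lemma sf_divide: "x \<in> K \<Longrightarrow> y \<in> K \<Longrightarrow> x / y \<in> K"
  using sf_mult[of x "inverse y"] sf_inverse[of y] by (simp add: divide_inverse)
lemma sf_sum: "(\<And>i. i \<in> A \<Longrightarrow> f i \<in> K) \<Longrightarrow> sum f A \<in> K"
  by (induction A rule: infinite_finite_induct) (auto simp: sf_0 sf_add)
lemma sf_power: "x \<in> K \<Longrightarrow> x ^ n \<in> K"
  by (induction n) (auto simp: sf_1 sf_mult)
lemma sf_card_ge2: "card K \<ge> 2"
proof -
  have "{0,1} \<subseteq> K" using sf_0 sf_1 by auto
  hence "card {0::'a,1} \<le> card K" by (intro card_mono) auto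
  thus ?thesis by simp
qed

lemma ss_uminus: "is_subspace K V \<Longrightarrow> x \<in> V \<Longrightarrow> - x \<in> V"
  using sf_uminus[OF sf_1] unfolding is_subspace_def by (metis mult_minus1)
lemma ss_diff: "is_subspace K V \<Longrightarrow> x \<in> V \<Longrightarrow> y \<in> V \<Longrightarrow> x - y \<in> V"
  using ss_uminus[of V y] unfolding is_subspace_def by (metis diff_conv_add_uminus)

lemma span_mem: "a \<in> A \<Longrightarrow> a \<in> span_over K A"
  unfolding span_over_def
  by (rule CollectI, rule exI[of _ "{a}"], rule exI[of _ "\<lambda>_. 1"]) (auto simp: sf_1)

lemma span_subspace: "is_subspace K (span_over K A)"
  unfolding is_subspace_def
proof (intro conjI ballI)
  show "0 \<in> span_over K A" unfolding span_over_def
    by (rule CollectI, rule exI[of _ "{}"]) auto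
next
  fix x y assume "x \<in> span_over K A" "y \<in> span_over K A"
  then obtain B1 c1 B2 c2 where 1: "x = (\<Sum>a\<in>B1. c1 a * a)" "finite B1" "B1 \<subseteq> A" "\<forall>a\<in>B1. c1 a \<in> K"
    and 2: "y = (\<Sum>a\<in>B2. c2 a * a)" "finite B2" "B2 \<subseteq> A" "\<forall>a\<in>B2. c2 a \<in> K"
    unfolding span_over_def by blast
  define d where "d a = (if a \<in> B1 then c1 a else 0) + (if a \<in> B2 then c2 a else 0)" for a
  have "x = (\<Sum>a\<in>B1 \<union> B2. (if a \<in> B1 then c1 a * a else 0))"
    using 1 by (simp add: sum.If_cases Int_absorb1)
  moreover have "y = (\<Sum>a\<in>B1 \<union> B2. (if a \<in> B2 then c2 a * a else 0))"
    using 2 by (simp add: sum.If_cases Int_absorb1)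
  ultimately have "x + y = (\<Sum>a\<in>B1 \<union> B2. d a * a)"
    by (simp add: sum.distrib[symmetric]) (intro sum.cong, auto simp: d_def distrib_right)
  moreover have "\<forall>a\<in>B1 \<union> B2. d a \<in> K" using 1 2 by (auto simp: d_def sf_add sf_0)
  ultimately show "x + y \<in> span_over K A" unfolding span_over_def using 1 2
    by (intro CollectI exI[of _ "B1 \<union> B2"] exI[of _ d]) auto
next
  fix c x assume c: "c \<in> K" and "x \<in> span_over K A"
  then obtain B1 c1 where 1: "x = (\<Sum>a\<in>B1. c1 a * a)" "finite B1" "B1 \<subseteq> A" "\<forall>a\<in>B1. c1 a \<in> K"
    unfolding span_over_def by blast
  have "c * x = (\<Sum>a\<in>B1. (c * c1 a) * a)" using 1 by (simp add: sum_distrib_left mult.assoc)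
  moreover have "\<forall>a\<in>B1. c * c1 a \<in> K" using 1 c by (auto simp: sf_mult)
  ultimately show "c * x \<in> span_over K A" unfolding span_over_def using 1
    by (intro CollectI exI[of _ B1] exI[of _ "\<lambda>a. c * c1 a"]) auto
qed
end

lemma ss_sum: "is_subspace K V \<Longrightarrow> (\<And>i. i \<in> A \<Longrightarrow> f i \<in> V) \<Longrightarrow> sum f A \<in> V"
  by (induction A rule: infinite_finite_induct) (auto simp: is_subspace_def)

lemma span_least:
  assumes "is_subspace K V" "A \<subseteq> V" shows "span_over K A \<subseteq> V"
proof
  fix x assume "x \<in> span_over K A"
  then obtain B c where 1: "x = (\<Sum>a\<in>B. c a * a)" "B \<subseteq> A" "\<forall>a\<in>B. c a \<in> K"
    unfolding span_over_def by blast
  show "x \<in> V" unfolding 1(1) using assms 1 by (intro ss_sum) (auto simp: is_subspace_def)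
qed

section \<open>Dimension via cardinality\<close>

context fixes K :: "'a::{field,finite} set" assumes sf: "is_subfield K"
begin

lemma indep_card_span:
  assumes fin: "finite B" and ind: "indep_over K B"
  shows "card (span_over K B) = card K ^ card B"
proof -
  define \<phi> where "\<phi> c = (\<Sum>a\<in>B. c a * a)" for c :: "'a \<Rightarrow> 'a"
  have img: "\<phi> ` (PiE B (\<lambda>_. K)) = span_over K B"
  proof
    show "\<phi> ` (PiE B (\<lambda>_. K)) \<subseteq> span_over K B"
      unfolding span_over_def \<phi>_def using fin by (auto simp: PiE_def Pi_def)
  next
    show "span_over K B \<subseteq> \<phi> ` (PiE B (\<lambda>_. K))"
    proof
      fix z assume "z \<in> span_over K B"
      then obtain B' c where 1: "z = (\<Sum>a\<in>B'. c a * a)" "B' \<subseteq> B" "\<forall>a\<in>B'. c a \<in> K"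
        unfolding span_over_def by blast
      define c' where "c' a = (if a \<in> B then (if a \<in> B' then c a else 0) else undefined)" for a
      have "c' \<in> PiE B (\<lambda>_. K)" using 1 sf_0[OF sf] by (auto simp: c'_def PiE_def Pi_def extensional_def)
      moreover have "\<phi> c' = z"
      proof -
        have "\<phi> c' = (\<Sum>a\<in>B. if a \<in> B' then c a * a else 0)"
          unfolding \<phi>_def c'_def by (intro sum.cong) auto
        also have "\<dots> = (\<Sum>a\<in>B \<inter> B'. c a * a)" using fin by (simp add: sum.inter_restrict)
        also have "B \<inter> B' = B'" using 1 by auto
        finally show ?thesis using 1 by simp
      qed
      ultimately show "z \<in> \<phi> ` (PiE B (\<lambda>_. K))" by blast
    qed
  qed
  have inj: "inj_on \<phi> (PiE B (\<lambda>_. K))"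
  proof (rule inj_onI)
    fix c1 c2 assume c1: "c1 \<in> PiE B (\<lambda>_. K)" and c2: "c2 \<in> PiE B (\<lambda>_. K)" and eq: "\<phi> c1 = \<phi> c2"
    have "(\<Sum>a\<in>B. (c1 a - c2 a) * a) = \<phi> c1 - \<phi> c2"
      unfolding \<phi>_def by (simp add: sum_subtractf left_diff_distrib)
    hence "(\<Sum>a\<in>B. (c1 a - c2 a) * a) = 0" using eq by simp
    moreover have "\<forall>a\<in>B. c1 a - c2 a \<in> K" using c1 c2 by (auto intro: sf_diff[OF sf])
    ultimately have "\<forall>a\<in>B. c1 a - c2 a = 0" using ind unfolding indep_over_def
      by (elim allE[of _ "\<lambda>a. c1 a - c2 a"]) auto
    thus "c1 = c2" using c1 c2 by (intro ext) (metis PiE_arb eq_iff_diff_eq_0)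
  qed
  have "card (span_over K B) = card (PiE B (\<lambda>_. K))"
    using card_image[OF inj] img by simp
  also have "\<dots> = card K ^ card B" using fin by (simp add: card_PiE)
  finally show ?thesis .
qed

lemma basis_exists:
  assumes V: "is_subspace K V"
  shows "\<exists>B. B \<subseteq> V \<and> finite B \<and> indep_over K B \<and> span_over K B = V"
proof -
  define C where "C = {B. B \<subseteq> V \<and> indep_over K B}"
  have finC: "finite C" by simp
  have "{} \<in> C" unfolding C_def indep_over_def by auto
  hence ne: "card ` C \<noteq> {}" by auto
  define n where "n = Max (card ` C)"
  obtain B where B: "B \<in> C" "card B = n" using Max_in[OF _ ne] finC unfolding n_def by auto
  have maxB: "card B' \<le> card B" if "B' \<in> C" for B'
    using Max_ge[of "card ` C" "card B'"] finC that B(2) unfolding n_def by auto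
  have BV: "B \<subseteq> V" and indB: "indep_over K B" using B(1) unfolding C_def by auto
  have "V \<subseteq> span_over K B"
  proof
    fix v assume v: "v \<in> V"
    show "v \<in> span_over K B"
    proof (cases "v \<in> B")
      case True thus ?thesis by (rule span_mem[OF sf])
    next
      case False
      have "card (insert v B) > card B" using False by simp
      hence "insert v B \<notin> C" using maxB by force
      hence "\<not> indep_over K (insert v B)" using v BV unfolding C_def by auto
      then obtain c where c: "\<forall>b\<in>insert v B. c b \<in> K" "(\<Sum>b\<in>insert v B. c b * b) = 0"
        "\<exists>b\<in>insert v B. c b \<noteq> 0" unfolding indep_over_def by blast
      have s: "c v * v + (\<Sum>b\<in>B. c b * b) = 0" using c(2) False by simp
      have cv: "c v \<noteq> 0"
      proof
        assume "c v = 0"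
        hence "(\<Sum>b\<in>B. c b * b) = 0" using s by simp
        hence "\<forall>b\<in>B. c b = 0" using indB c(1) unfolding indep_over_def by blast
        thus False using c(3) \<open>c v = 0\<close> by auto
      qed
      have "v = (\<Sum>b\<in>B. (- (c b / c v)) * b)"
      proof -
        have "(\<Sum>b\<in>B. (- (c b / c v)) * b) = - (1 / c v) * (\<Sum>b\<in>B. c b * b)"
          by (simp add: sum_distrib_left)
        also have "(\<Sum>b\<in>B. c b * b) = - (c v * v)" using s by (simp add: eq_neg_iff_add_eq_0 add.commute)
        finally show ?thesis using cv by simp
      qed
      moreover have "\<forall>b\<in>B. - (c b / c v) \<in> K" using c(1) by (auto intro!: sf_uminus[OF sf] sf_divide[OF sf])
      ultimately show ?thesis unfolding span_over_def using finite[of B]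
        by (intro CollectI exI[of _ B] exI[of _ "\<lambda>b. - (c b / c v)"]) auto
    qed
  qed
  moreover have "span_over K B \<subseteq> V" using span_least[OF V BV] .
  ultimately show ?thesis using BV indB by auto
qed

lemma dim_card:
  assumes V: "is_subspace K V"
  shows "card V = card K ^ dim_over K V"
proof -
  obtain B where B: "B \<subseteq> V" "finite B" "indep_over K B" "span_over K B = V"
    using basis_exists[OF V] by blast
  have cV: "card V = card K ^ card B" using indep_card_span[OF B(2,3)] B(4) by simp
  have "dim_over K V = card B" unfolding dim_over_def
  proof (rule the_equality)
    show "\<exists>B'. B' \<subseteq> V \<and> finite B' \<and> indep_over K B' \<and> span_over K B' = V \<and> card B' = card B"
      using B by blast
  next
    fix d assume "\<exists>B'. B' \<subseteq> V \<and> finite B' \<and> indep_over K B' \<and> span_over K B' = V \<and> card B' = d"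
    then obtain B' where "finite B'" "indep_over K B'" "span_over K B' = V" "card B' = d" by blast
    hence "card K ^ d = card K ^ card B" using indep_card_span cV by metis
    thus "d = card B" using sf_card_ge2[OF sf] by (simp add: power_inject_exp)
  qed
  thus ?thesis using cV by simp
qed

lemma dim_unique:
  assumes V: "is_subspace K V" and "card V = card K ^ d"
  shows "dim_over K V = d"
  using dim_card[OF V] assms(2) sf_card_ge2[OF sf] by (simp add: power_inject_exp)

end

lemma subfield_UNIV: "is_subfield (UNIV :: 'a::field set)" by (simp add: is_subfield_def)

lemma adj_subfield: assumes "is_subfield K" shows "is_subfield (field_adjoin K lam)"
  unfolding is_subfield_def field_adjoin_def
  apply (intro conjI ballI impI InterI)
  by (simp_all add: is_subfield_def)

lemma adj_K: "K \<subseteq> field_adjoin K lam" unfolding field_adjoin_def by auto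
lemma adj_lam: "lam \<in> field_adjoin K lam" unfolding field_adjoin_def by auto
lemma adj_least: "is_subfield F \<Longrightarrow> K \<subseteq> F \<Longrightarrow> lam \<in> F \<Longrightarrow> field_adjoin K lam \<subseteq> F"
  unfolding field_adjoin_def by auto

lemma subfield_subspace: "is_subfield F \<Longrightarrow> K \<subseteq> F \<Longrightarrow> is_subspace K F"
  unfolding is_subfield_def is_subspace_def by auto

section \<open>Polynomials with coefficients in K\<close>

definition Kp :: "'a::field set \<Rightarrow> 'a poly set" where "Kp K = {p. \<forall>i. coeff p i \<in> K}"
definition Pd :: "'a::field set \<Rightarrow> nat \<Rightarrow> 'a poly set" where
  "Pd K d = {p. (\<forall>i. coeff p i \<in> K) \<and> (\<forall>i\<ge>d. coeff p i = 0)}"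
definition Wd :: "'a::field set \<Rightarrow> 'a \<Rightarrow> nat \<Rightarrow> 'a set" where
  "Wd K lam d = (\<lambda>p. poly p lam) ` Pd K d"

lemma poly_in_subfield:
  fixes F :: "'a::{field,finite} set"
  assumes "is_subfield F" "\<forall>i. coeff p i \<in> F" "x \<in> F" shows "poly p x \<in> F"
  unfolding poly_altdef using assms
  by (intro sf_sum[OF assms(1)] sf_mult[OF assms(1)] sf_power[OF assms(1)]) auto

context fixes K :: "'a::{field,finite} set" assumes sf: "is_subfield K"
begin

lemma Kp_add: "p \<in> Kp K \<Longrightarrow> r \<in> Kp K \<Longrightarrow> p + r \<in> Kp K"
  unfolding Kp_def by (auto intro: sf_add[OF sf])
lemma Kp_diff: "p \<in> Kp K \<Longrightarrow> r \<in> Kp K \<Longrightarrow> p - r \<in> Kp K"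
  unfolding Kp_def by (auto intro: sf_diff[OF sf])
lemma Kp_mult: "p \<in> Kp K \<Longrightarrow> r \<in> Kp K \<Longrightarrow> p * r \<in> Kp K"
  unfolding Kp_def by (simp add: coeff_mult sf_sum[OF sf] sf_mult[OF sf])
lemma Kp_monom: "c \<in> K \<Longrightarrow> monom c n \<in> Kp K"
  unfolding Kp_def coeff_monom using sf_0[OF sf] by auto
lemma Kp_0: "0 \<in> Kp K" unfolding Kp_def using sf_0[OF sf] by auto

lemma Pd_iff: "p \<in> Pd K d \<longleftrightarrow> p \<in> Kp K \<and> (p = 0 \<or> degree p < d)"
proof
  assume p: "p \<in> Pd K d"
  have "degree p < d" if "p \<noteq> 0"
  proof (rule ccontr)
    assume "\<not> degree p < d"
    hence "coeff p (degree p) = 0" using p unfolding Pd_def by auto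
    thus False using that by simp
  qed
  thus "p \<in> Kp K \<and> (p = 0 \<or> degree p < d)" using p unfolding Pd_def Kp_def by auto
next
  assume "p \<in> Kp K \<and> (p = 0 \<or> degree p < d)"
  thus "p \<in> Pd K d" unfolding Pd_def Kp_def using coeff_eq_0[of p] by fastforce
qed

lemma Pd_Kp: "p \<in> Pd K d \<Longrightarrow> p \<in> Kp K" by (simp add: Pd_iff)
lemma Pd_mono: "d \<le> d' \<Longrightarrow> p \<in> Pd K d \<Longrightarrow> p \<in> Pd K d'" by (auto simp: Pd_iff)
lemma Pd_0: "0 \<in> Pd K d" by (simp add: Pd_iff Kp_0)
lemma Pd_add: "p \<in> Pd K d \<Longrightarrow> r \<in> Pd K d \<Longrightarrow> p + r \<in> Pd K d"
  unfolding Pd_def by (auto intro: sf_add[OF sf])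
lemma Pd_diff: "p \<in> Pd K d \<Longrightarrow> r \<in> Pd K d \<Longrightarrow> p - r \<in> Pd K d"
  unfolding Pd_def by (auto intro: sf_diff[OF sf])
lemma Pd_smult: "c \<in> K \<Longrightarrow> p \<in> Pd K d \<Longrightarrow> smult c p \<in> Pd K d"
  unfolding Pd_def by (auto intro: sf_mult[OF sf])
lemma Pd_monom: "c \<in> K \<Longrightarrow> j < d \<Longrightarrow> monom c j \<in> Pd K d"
  unfolding Pd_def coeff_monom using sf_0[OF sf] by auto
lemma Pd_const: "c \<in> K \<Longrightarrow> 0 < d \<Longrightarrow> [:c:] \<in> Pd K d"
  unfolding Pd_def using sf_0[OF sf] by (auto simp: coeff_pCons split: nat.splits)
lemma Pd_mult: "p \<in> Pd K a \<Longrightarrow> r \<in> Pd K b \<Longrightarrow> p * r \<in> Pd K (a + b - 1)"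
proof -
  assume p: "p \<in> Pd K a" and r: "r \<in> Pd K b"
  have "p * r \<in> Kp K" using p r by (simp add: Pd_iff Kp_mult)
  moreover have "degree (p * r) < a + b - 1" if "p \<noteq> 0" "r \<noteq> 0"
    using p r that degree_mult_le[of p r] by (auto simp: Pd_iff)
  ultimately show ?thesis by (auto simp: Pd_iff)
qed

lemma poly_Pd: assumes "p \<in> Pd K d" shows "poly p x = (\<Sum>i<d. coeff p i * x ^ i)"
proof (cases "p = 0")
  case True thus ?thesis by simp
next
  case False
  hence dp: "degree p < d" using assms by (simp add: Pd_iff)
  have "(\<Sum>i<d. coeff p i * x ^ i) = (\<Sum>i\<le>degree p. coeff p i * x ^ i)"
    using dp by (intro sum.mono_neutral_right) (auto simp: coeff_eq_0)
  thus ?thesis by (simp add: poly_altdef)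
qed

lemma card_Pd: "card (Pd K d) = card K ^ d"
proof -
  define f where "f p = restrict (coeff p) {..<d}" for p :: "'a poly"
  have inj: "inj_on f (Pd K d)"
  proof (rule inj_onI)
    fix p r assume p: "p \<in> Pd K d" and r: "r \<in> Pd K d" and fe: "f p = f r"
    have "coeff p i = coeff r i" if "i < d" for i
      using fun_cong[OF fe, of i] that unfolding f_def by simp
    moreover have "coeff p i = coeff r i" if "i \<ge> d" for i using that p r unfolding Pd_def by auto
    ultimately show "p = r" by (intro poly_eqI) (meson not_le)
  qed
  have img: "f ` Pd K d = PiE {..<d} (\<lambda>_. K)"
  proof
    show "f ` Pd K d \<subseteq> PiE {..<d} (\<lambda>_. K)" 
    proof (rule image_subsetI)
      fix p assume "p \<in> Pd K d"
      thus "f p \<in> PiE {..<d} (\<lambda>_. K)" unfolding f_def restrict_PiE_iff Pd_def by blast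
    qed
  next
    show "PiE {..<d} (\<lambda>_. K) \<subseteq> f ` Pd K d"
    proof
      fix g assume g: "g \<in> PiE {..<d} (\<lambda>_. K)"
      define p where "p = Poly (map g [0..<d])"
      have cp: "coeff p i = (if i < d then g i else 0)" for i
        unfolding p_def by (simp add: nth_default_def)
      have "p \<in> Pd K d" unfolding Pd_def
      proof (intro CollectI conjI allI impI)
        fix i show "coeff p i \<in> K"
          using PiE_mem[OF g, of i] sf_0[OF sf] by (simp add: cp)
      next
        fix i :: nat assume "d \<le> i" thus "coeff p i = 0" by (simp add: cp)
      qed
      moreover have "f p = g"
      proof
        fix x show "f p x = g x"
        proof (cases "x < d")
          case True thus ?thesis by (simp add: f_def cp)
        next
          case False thus ?thesis using PiE_arb[OF g, of x] by (simp add: f_def)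
        qed
      qed
      ultimately show "g \<in> f ` Pd K d" by (intro image_eqI[of g f p]) auto
    qed
  qed
  have "card (Pd K d) = card (PiE {..<d} (\<lambda>_. K :: 'a set))" using card_image[OF inj] img by simp
  also have "\<dots> = card K ^ d" by (simp add: card_PiE)
  finally show ?thesis .
qed

lemma W_subspace: "is_subspace K (Wd K lam d)"
  unfolding is_subspace_def Wd_def
proof (intro conjI ballI)
  show "0 \<in> (\<lambda>p. poly p lam) ` Pd K d" using Pd_0 by force
next
  fix x y assume "x \<in> (\<lambda>p. poly p lam) ` Pd K d" "y \<in> (\<lambda>p. poly p lam) ` Pd K d"
  then obtain p r where "p \<in> Pd K d" "r \<in> Pd K d" "x = poly p lam" "y = poly r lam" by auto
  thus "x + y \<in> (\<lambda>p. poly p lam) ` Pd K d"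
    by (intro image_eqI[of _ _ "p + r"]) (auto simp: Pd_add)
next
  fix c x assume "c \<in> K" "x \<in> (\<lambda>p. poly p lam) ` Pd K d"
  then obtain p where "p \<in> Pd K d" "x = poly p lam" by auto
  thus "c * x \<in> (\<lambda>p. poly p lam) ` Pd K d" using \<open>c \<in> K\<close>
    by (intro image_eqI[of _ _ "smult c p"]) (auto simp: Pd_smult)
qed

lemma W_span: "Wd K lam d = span_over K {lam ^ j | j. j < d}"
proof
  show "Wd K lam d \<subseteq> span_over K {lam ^ j | j. j < d}"
  proof
    fix x assume "x \<in> Wd K lam d"
    then obtain p where p: "p \<in> Pd K d" "x = poly p lam" unfolding Wd_def by auto
    have "(\<Sum>i<d. coeff p i * lam ^ i) \<in> span_over K {lam ^ j | j. j < d}"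
    proof (rule ss_sum[OF span_subspace[OF sf]])
      fix i assume "i \<in> {..<d}"
      hence "lam ^ i \<in> span_over K {lam ^ j | j. j < d}" by (intro span_mem[OF sf]) auto
      moreover have "coeff p i \<in> K" using p unfolding Pd_def by auto
      ultimately show "coeff p i * lam ^ i \<in> span_over K {lam ^ j | j. j < d}"
        using span_subspace[OF sf] unfolding is_subspace_def by blast
    qed
    thus "x \<in> span_over K {lam ^ j | j. j < d}" using p poly_Pd by simp
  qed
next
  show "span_over K {lam ^ j | j. j < d} \<subseteq> Wd K lam d"
  proof (rule span_least[OF W_subspace], safe)
    fix j :: nat assume "j < d"
    thus "lam ^ j \<in> Wd K lam d" unfolding Wd_def using sf_1[OF sf]
      by (intro image_eqI[of _ _ "monom 1 j"]) (auto simp: poly_monom Pd_monom)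
  qed
qed

lemma W_L: "Wd K lam d \<subseteq> field_adjoin K lam"
  unfolding Wd_def using adj_subfield[OF sf] adj_K[of K lam] adj_lam[of lam K]
  by (auto intro!: poly_in_subfield simp: Pd_def subset_iff)

lemma W1: "Wd K lam 1 = K"
proof
  show "Wd K lam 1 \<subseteq> K"
  proof
    fix x assume "x \<in> Wd K lam 1"
    then obtain p where p: "p \<in> Pd K 1" "x = poly p lam" unfolding Wd_def by auto
    have "x = (\<Sum>i<1. coeff p i * lam ^ i)" using p poly_Pd by simp
    thus "x \<in> K" using p unfolding Pd_def by simp
  qed
next
  show "K \<subseteq> Wd K lam 1"
  proof
    fix c assume "c \<in> K"
    thus "c \<in> Wd K lam 1" unfolding Wd_def by (intro image_eqI[of _ _ "[:c:]"]) (auto simp: Pd_const)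
  qed
qed

end

lemma finite_Pd: "is_subfield (K::'a::{field,finite} set) \<Longrightarrow> finite (Pd K d)"
  using card_Pd[of K d] sf_card_ge2[of K] by (intro card_ge_0_finite) simp

lemma poly_div_key:
  fixes K :: "'a::{field,finite} set"
  assumes sf: "is_subfield K"
    and U0: "U0 \<in> Kp K" "U0 \<noteq> 0" and V0: "V0 \<in> Kp K" "V0 \<noteq> 0"
    and minim: "\<And>X Y. X \<in> Kp K \<Longrightarrow> Y \<in> Kp K \<Longrightarrow> Y \<noteq> 0 \<Longrightarrow> X * V0 = Y * U0 \<Longrightarrow>
       degree Y < degree V0 \<Longrightarrow> degree X < degree U0 \<Longrightarrow> False"
  shows "X \<in> Kp K \<Longrightarrow> Y \<in> Kp K \<Longrightarrow> X * V0 = Y * U0 \<Longrightarrow> \<exists>H\<in>Kp K. Y = H * V0 \<and> X = H * U0"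
proof (induction "if Y = 0 then 0 else Suc (degree Y)" arbitrary: X Y rule: less_induct)
  case (less Y X)
  show ?case
  proof (cases "Y = 0")
    case True
    hence "X * V0 = 0" using less.prems by simp
    hence "X = 0" using V0 by simp
    thus ?thesis using True Kp_0[OF sf] by (intro bexI[of _ 0]) auto
  next
    case Ynz: False
    hence Xnz: "X \<noteq> 0" using less.prems U0 by auto
    have degeq: "degree X + degree V0 = degree Y + degree U0"
      using less.prems(3) Xnz Ynz U0 V0 by (metis degree_mult_eq)
    show ?thesis
    proof (cases "degree Y < degree V0")
      case True
      hence "degree X < degree U0" using degeq by simp
      thus ?thesis using minim[OF less.prems(1,2) Ynz less.prems(3) True] by blast
    next
      case False
      define c where "c = lead_coeff Y / lead_coeff V0"
      define D where "D = degree Y - degree V0"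
      define M where "M = monom c D"
      have cK: "c \<in> K" using less.prems(2) V0(1) unfolding c_def Kp_def by (auto intro: sf_divide[OF sf])
      have cnz: "c \<noteq> 0" using Ynz V0 unfolding c_def by simp
      have MK: "M \<in> Kp K" using Kp_monom[OF sf cK] M_def by simp
      define Y' where "Y' = Y - M * V0"
      define X' where "X' = X - M * U0"
      have eq': "X' * V0 = Y' * U0" unfolding X'_def Y'_def using less.prems(3)
        by (simp add: algebra_simps)
      have degMV: "degree (M * V0) = degree Y" using cnz V0 False
        by (simp add: M_def D_def degree_mult_eq degree_monom_eq)
      have lcMV: "lead_coeff (M * V0) = lead_coeff Y" using cnz V0
        by (simp add: M_def c_def lead_coeff_mult degree_monom_eq)
      have "(if Y' = 0 then 0 else Suc (degree Y')) < (if Y = 0 then 0 else Suc (degree Y))"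
      proof (cases "Y' = 0")
        case True thus ?thesis using Ynz by simp
      next
        case False
        have le: "degree Y' \<le> degree Y" unfolding Y'_def using degMV by (intro degree_diff_le) auto
        have "coeff Y' (degree Y) = 0" unfolding Y'_def using lcMV degMV by simp
        hence "degree Y' \<noteq> degree Y" using False by (metis leading_coeff_0_iff)
        thus ?thesis using le Ynz False by simp
      qed
      moreover have "X' \<in> Kp K" "Y' \<in> Kp K" unfolding X'_def Y'_def
        using less.prems MK U0 V0 by (auto intro!: Kp_diff[OF sf] Kp_mult[OF sf])
      ultimately obtain H' where H': "H' \<in> Kp K" "Y' = H' * V0" "X' = H' * U0"
        using less.hyps eq' by blast
      show ?thesis
      proof (rule bexI[of _ "H' + M"])
        show "Y = (H' + M) * V0 \<and> X = (H' + M) * U0" using H'(2,3) unfolding X'_def Y'_def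
          by (simp add: algebra_simps eq_diff_eq)
        show "H' + M \<in> Kp K" using H'(1) MK by (rule Kp_add[OF sf])
      qed
    qed
  qed
qed

context fixes K :: "'a::{field,finite} set" and lam :: 'a and t :: nat
  assumes sf: "is_subfield K" and cardL: "card (field_adjoin K lam) = card K ^ t"
begin

lemma ev_inj0:
  assumes p: "p \<in> Pd K t" "poly p lam = 0" shows "p = 0"
proof (rule ccontr)
  assume pnz: "p \<noteq> 0"
  define Z where "Z = {d. \<exists>p \<in> Pd K (Suc d). p \<noteq> 0 \<and> poly p lam = 0}"
  have pdeg: "degree p < t" using p pnz by (simp add: Pd_iff[OF sf])
  have "degree p \<in> Z" using p pnz unfolding Z_def by (auto simp: Pd_iff[OF sf])
  define d where "d = (LEAST d. d \<in> Z)"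
  have dZ: "d \<in> Z" using LeastI[of "\<lambda>d. d \<in> Z", OF \<open>degree p \<in> Z\<close>] d_def by simp
  have dle: "d \<le> degree p" using Least_le[of "\<lambda>d. d \<in> Z", OF \<open>degree p \<in> Z\<close>] d_def by simp
  have dt: "d < t" using dle pdeg by simp
  obtain p0 where p0: "p0 \<in> Pd K (Suc d)" "p0 \<noteq> 0" "poly p0 lam = 0" using dZ Z_def by auto
  have lc: "coeff p0 d \<noteq> 0"
  proof
    assume c0: "coeff p0 d = 0"
    have p0d: "p0 \<in> Pd K d" unfolding Pd_def
    proof (intro CollectI conjI allI impI)
      fix i show "coeff p0 i \<in> K" using p0(1) unfolding Pd_def by blast
    next
      fix i assume "d \<le> i"
      show "coeff p0 i = 0"
      proof (cases "i = d")
        case True thus ?thesis using c0 by simp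
      next
        case False hence "Suc d \<le> i" using \<open>d \<le> i\<close> by simp
        thus ?thesis using p0(1) unfolding Pd_def by blast
      qed
    qed
    show False
    proof (cases d)
      case 0
      hence "p0 = 0" using p0d unfolding Pd_def by (auto intro: poly_eqI)
      thus False using p0 by simp
    next
      case (Suc d')
      hence "d' \<in> Z" using p0 p0d unfolding Z_def by auto
      hence "d \<le> d'" using Least_le[of "\<lambda>d. d \<in> Z"] d_def by simp
      thus False using Suc by simp
    qed
  qed
  have d1: "d \<ge> 1"
  proof (rule ccontr)
    assume "\<not> d \<ge> 1"
    hence "d = 0" by simp
    hence "poly p0 lam = coeff p0 0" using poly_Pd[OF sf p0(1)] by simp
    thus False using p0(3) lc \<open>d = 0\<close> by simp
  qed
  define R where "R = Wd K lam d"
  have Rss: "is_subspace K R" unfolding R_def by (rule W_subspace[OF sf])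
  have lamR: "lam * x \<in> R" if "x \<in> R" for x
  proof -
    obtain r where r: "r \<in> Pd K d" "x = poly r lam" using \<open>x \<in> R\<close> unfolding R_def Wd_def by auto
    define r' where "r' = pCons 0 r"
    define c where "c = coeff r' d / coeff p0 d"
    define r'' where "r'' = r' - smult c p0"
    have cr': "coeff r' i = (case i of 0 \<Rightarrow> 0 | Suc j \<Rightarrow> coeff r j)" for i
      unfolding r'_def by (simp add: coeff_pCons)
    have r'K: "coeff r' i \<in> K" for i
      using r(1) sf_0[OF sf] unfolding cr' Pd_def by (auto split: nat.splits)
    have cK: "c \<in> K" unfolding c_def using r'K p0(1) unfolding Pd_def by (auto intro: sf_divide[OF sf])
    have "r'' \<in> Pd K d" unfolding Pd_def
    proof (intro CollectI conjI allI impI)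
      fix i show "coeff r'' i \<in> K" unfolding r''_def using r'K cK p0(1) unfolding Pd_def
        by (auto intro!: sf_diff[OF sf] sf_mult[OF sf])
    next
      fix i assume i: "d \<le> i"
      show "coeff r'' i = 0"
      proof (cases "i = d")
        case True thus ?thesis unfolding r''_def c_def using lc by simp
      next
        case False
        hence "i \<ge> Suc d" using i by simp
        hence "coeff p0 i = 0" "coeff r' i = 0" using p0(1) r(1) unfolding Pd_def cr'
          by (auto split: nat.splits)
        thus ?thesis unfolding r''_def by simp
      qed
    qed
    moreover have "poly r'' lam = lam * x" unfolding r''_def r'_def using p0(3) r(2) by simp
    ultimately show ?thesis unfolding R_def Wd_def by (metis image_eqI)
  qed
  have powR: "lam ^ j * y \<in> R" if "y \<in> R" for j y
    using that by (induction j) (auto simp: mult.assoc dest: lamR)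
  have mulR: "x * y \<in> R" if "x \<in> R" "y \<in> R" for x y
  proof -
    obtain r where r: "r \<in> Pd K d" "x = poly r lam" using \<open>x \<in> R\<close> unfolding R_def Wd_def by auto
    have "x * y = (\<Sum>i<d. coeff r i * (lam ^ i * y))"
      using poly_Pd[OF sf r(1)] r(2) by (simp add: sum_distrib_right mult.assoc)
    also have "\<dots> \<in> R"
      using Rss powR[OF \<open>y \<in> R\<close>] r(1) unfolding Pd_def is_subspace_def
      by (intro ss_sum[OF Rss]) auto
    finally show ?thesis .
  qed
  have KR: "K \<subseteq> R"
  proof
    fix c assume "c \<in> K"
    thus "c \<in> R" unfolding R_def Wd_def using d1
      by (intro image_eqI[of _ _ "[:c:]"]) (auto simp: Pd_const[OF sf])
  qed
  have oneR: "1 \<in> R" using KR sf_1[OF sf] by auto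
  have lamR': "lam \<in> R" using lamR[OF oneR] by simp
  have invR: "inverse x \<in> R" if "x \<in> R" for x
  proof (cases "x = 0")
    case True thus ?thesis using Rss unfolding is_subspace_def by simp
  next
    case False
    have "(\<lambda>y. x * y) ` R = R"
      by (rule endo_inj_surj) (auto intro: mulR[OF that] inj_onI simp: False)
    then obtain y where "y \<in> R" "x * y = 1" using oneR by (metis imageE)
    hence "inverse x = y" using False by (metis inverse_unique)
    thus ?thesis using \<open>y \<in> R\<close> by simp
  qed
  have "is_subfield R" unfolding is_subfield_def
    using Rss oneR mulR invR ss_uminus[OF sf Rss] unfolding is_subspace_def by blast
  hence "field_adjoin K lam \<subseteq> R" using adj_least KR lamR' by blast
  hence "card (field_adjoin K lam) \<le> card R" by (intro card_mono) auto
  also have "card R \<le> card (Pd K d)" unfolding R_def Wd_def by (rule card_image_le) (rule finite_Pd[OF sf])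
  also have "\<dots> = card K ^ d" by (rule card_Pd[OF sf])
  also have "\<dots> < card K ^ t" using dt sf_card_ge2[OF sf] by (intro power_strict_increasing) auto
  finally show False using cardL by simp
qed

lemma ev_inj: "p \<in> Pd K d \<Longrightarrow> r \<in> Pd K d \<Longrightarrow> d \<le> t \<Longrightarrow> poly p lam = poly r lam \<Longrightarrow> p = r"
  using ev_inj0[of "p - r"] Pd_diff[OF sf, of p d r] Pd_mono[OF sf, of d t] by auto

lemma card_W: "d \<le> t \<Longrightarrow> card (Wd K lam d) = card K ^ d"
  unfolding Wd_def using card_Pd[OF sf] ev_inj
  by (subst card_image) (auto intro: inj_onI)

end

definition good :: "'a::field set \<Rightarrow> 'a \<Rightarrow> 'a \<Rightarrow> nat \<Rightarrow> bool" where
  "good K lam \<alpha> j \<longleftrightarrow> (\<exists>v\<in>Wd K lam (Suc j). v \<noteq> 0 \<and> \<alpha> * v \<in> Wd K lam (Suc j))"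
definition Eset :: "'a::field set \<Rightarrow> 'a \<Rightarrow> 'a \<Rightarrow> nat \<Rightarrow> 'a set" where
  "Eset K lam \<alpha> N = {v \<in> Wd K lam N. \<alpha> * v \<in> Wd K lam N}"
definition cls :: "'a::field set \<Rightarrow> 'a \<Rightarrow> nat \<Rightarrow> 'a \<Rightarrow> nat" where
  "cls K lam m \<alpha> = (if \<exists>j<m. good K lam \<alpha> j then LEAST j. good K lam \<alpha> j else m)"

context fixes K :: "'a::{field,finite} set" and lam :: 'a and t :: nat
  assumes sf: "is_subfield K" and cardL: "card (field_adjoin K lam) = card K ^ t"
begin

lemma key_E:
  assumes anz: "\<alpha> \<noteq> 0" and ge: "good K lam \<alpha> e" and minE: "\<forall>j<e. \<not> good K lam \<alpha> j"
    and eN: "e < N" and Nt: "N + e \<le> t"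
  shows "card (Eset K lam \<alpha> N) = card K ^ (N - e)"
proof -
  obtain v0 where v0: "v0 \<in> Wd K lam (Suc e)" "v0 \<noteq> 0" "\<alpha> * v0 \<in> Wd K lam (Suc e)"
    using ge unfolding good_def by blast
  obtain V0 where V0: "V0 \<in> Pd K (Suc e)" "poly V0 lam = v0" using v0(1) unfolding Wd_def by auto
  obtain U0 where U0: "U0 \<in> Pd K (Suc e)" "poly U0 lam = \<alpha> * v0" using v0(3) unfolding Wd_def by auto
  have V0nz: "V0 \<noteq> 0" using V0 v0 by auto
  have U0nz: "U0 \<noteq> 0" using U0 v0 anz by auto
  define e' where "e' = max (degree U0) (degree V0)"
  have e'e: "e' \<le> e" using U0 V0 V0nz U0nz unfolding e'_def by (auto simp: Pd_iff[OF sf])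
  have "good K lam \<alpha> e'" unfolding good_def
  proof (intro bexI conjI)
    show "v0 \<in> Wd K lam (Suc e')" unfolding Wd_def using V0 V0nz
      by (intro image_eqI[of _ _ V0]) (auto simp: Pd_iff[OF sf] e'_def)
    show "\<alpha> * v0 \<in> Wd K lam (Suc e')" unfolding Wd_def using U0 U0nz
      by (intro image_eqI[of _ _ U0]) (auto simp: Pd_iff[OF sf] e'_def)
  qed (use v0 in auto)
  hence ee': "e \<le> e'" using minE by (meson not_le)
  have Ssub: "Eset K lam \<alpha> N = (\<lambda>h. v0 * h) ` Wd K lam (N - e)"
  proof
    show "(\<lambda>h. v0 * h) ` Wd K lam (N - e) \<subseteq> Eset K lam \<alpha> N"
    proof
      fix z assume "z \<in> (\<lambda>h. v0 * h) ` Wd K lam (N - e)"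
      then obtain H where H: "H \<in> Pd K (N - e)" "z = v0 * poly H lam" unfolding Wd_def by auto
      have "V0 * H \<in> Pd K (Suc e + (N - e) - 1)" by (rule Pd_mult[OF sf V0(1) H(1)])
      hence 1: "V0 * H \<in> Pd K N" using eN by simp
      have "U0 * H \<in> Pd K (Suc e + (N - e) - 1)" by (rule Pd_mult[OF sf U0(1) H(1)])
      hence 2: "U0 * H \<in> Pd K N" using eN by simp
      have "z \<in> Wd K lam N" unfolding Wd_def using 1 H V0 by (intro image_eqI[of _ _ "V0 * H"]) auto
      moreover have "\<alpha> * z \<in> Wd K lam N" unfolding Wd_def using 2 H U0
        by (intro image_eqI[of _ _ "U0 * H"]) (auto simp: mult.assoc)
      ultimately show "z \<in> Eset K lam \<alpha> N" unfolding Eset_def by simp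
    qed
  next
    show "Eset K lam \<alpha> N \<subseteq> (\<lambda>h. v0 * h) ` Wd K lam (N - e)"
    proof
      fix v assume "v \<in> Eset K lam \<alpha> N"
      hence vW: "v \<in> (\<lambda>p. poly p lam) ` Pd K N" and avW: "\<alpha> * v \<in> (\<lambda>p. poly p lam) ` Pd K N"
        unfolding Eset_def Wd_def by auto
      obtain Y where Y: "Y \<in> Pd K N" "poly Y lam = v" using vW by (auto elim!: imageE)
      obtain X where X: "X \<in> Pd K N" "poly X lam = \<alpha> * v" using avW by (auto elim!: imageE)
      have "X * V0 \<in> Pd K (N + Suc e - 1)" by (rule Pd_mult[OF sf X(1) V0(1)])
      hence XV: "X * V0 \<in> Pd K (N + e)" by simp
      have "Y * U0 \<in> Pd K (N + Suc e - 1)" by (rule Pd_mult[OF sf Y(1) U0(1)])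
      hence YU: "Y * U0 \<in> Pd K (N + e)" by simp
      have "poly (X * V0) lam = poly (Y * U0) lam" using X(2) Y(2) V0(2) U0(2) by (simp add: mult_ac)
      hence eqp: "X * V0 = Y * U0" using ev_inj[OF sf cardL XV YU Nt] by simp
      have minim: "False" if that: "X' \<in> Kp K" "Y' \<in> Kp K" "Y' \<noteq> 0" "X' * V0 = Y' * U0"
        "degree Y' < degree V0" "degree X' < degree U0" for X' Y'
      proof -
        have Y'P: "Y' \<in> Pd K e'" using that by (auto simp: Pd_iff[OF sf] e'_def)
        have X'P: "X' \<in> Pd K e'" using that by (auto simp: Pd_iff[OF sf] e'_def)
        have "e' \<ge> 1" using that(5) e'_def by simp
        have "e' \<le> t" using e'e eN Nt by simp
        hence "poly Y' lam \<noteq> 0" using ev_inj0[OF sf cardL, of Y'] Pd_mono[OF sf _ Y'P] that(3) by blast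
        moreover have "poly X' lam * v0 = poly Y' lam * (\<alpha> * v0)"
          using arg_cong[OF that(4), of "\<lambda>p. poly p lam"] V0 U0 by simp
        hence "\<alpha> * poly Y' lam = poly X' lam" using v0(2) by (simp add: mult_ac)
        ultimately have "good K lam \<alpha> (e' - 1)" unfolding good_def Wd_def using X'P Y'P \<open>e' \<ge> 1\<close>
          by (intro bexI[of _ "poly Y' lam"] conjI) (auto intro: image_eqI)
        thus False using minE e'e \<open>e' \<ge> 1\<close> ee' by simp
      qed
      have "\<exists>H\<in>Kp K. Y = H * V0 \<and> X = H * U0"
        by (rule poly_div_key[OF sf Pd_Kp[OF sf U0(1)] U0nz Pd_Kp[OF sf V0(1)] V0nz _
            Pd_Kp[OF sf X(1)] Pd_Kp[OF sf Y(1)] eqp]) (rule minim)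
      then obtain H where H: "H \<in> Kp K" "Y = H * V0" "X = H * U0" by blast
      have "H \<in> Pd K (N - e)"
      proof (cases "H = 0")
        case True thus ?thesis by (simp add: Pd_0[OF sf])
      next
        case False
        have "degree Y = degree H + degree V0" using H(2) False V0nz by (simp add: degree_mult_eq)
        moreover have "degree X = degree H + degree U0" using H(3) False U0nz by (simp add: degree_mult_eq)
        moreover have "Y \<noteq> 0" "X \<noteq> 0" using H False V0nz U0nz by auto
        ultimately have "degree H + e' < N" using X(1) Y(1) by (auto simp: Pd_iff[OF sf] e'_def)
        thus ?thesis using H(1) ee' by (auto simp: Pd_iff[OF sf])
      qed
      moreover have "v = v0 * poly H lam" using Y(2) H(2) V0(2) by (simp add: mult_ac)
      ultimately show "v \<in> (\<lambda>h. v0 * h) ` Wd K lam (N - e)" unfolding Wd_def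
        by (intro image_eqI[of v "\<lambda>h. v0 * h" "poly H lam"] imageI)
    qed
  qed
  have "card (Eset K lam \<alpha> N) = card (Wd K lam (N - e))"
    unfolding Ssub using v0(2) by (intro card_image inj_onI) auto
  also have "\<dots> = card K ^ (N - e)" using card_W[OF sf cardL] Nt by simp
  finally show ?thesis .
qed

end

context fixes K :: "'a::{field,finite} set" and lam :: 'a and t :: nat
  assumes sf: "is_subfield K" and cardL: "card (field_adjoin K lam) = card K ^ t"
begin

lemma W0: "0 \<in> Wd K lam N" using W_subspace[OF sf] unfolding is_subspace_def by blast

lemma E0: "0 \<in> Eset K lam \<alpha> N" unfolding Eset_def using W0 by simp

lemma E_zero:
  assumes "1 \<le> N" "\<not> good K lam \<alpha> (N - 1)" shows "Eset K lam \<alpha> N = {0}"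
proof -
  have "v = 0" if "v \<in> Eset K lam \<alpha> N" for v
  proof (rule ccontr)
    assume "v \<noteq> 0"
    hence "good K lam \<alpha> (N - 1)" using that assms(1) unfolding good_def Eset_def by auto
    thus False using assms(2) by simp
  qed
  thus ?thesis using E0 by blast
qed

lemma cls_le: "cls K lam m \<alpha> \<le> m"
  unfolding cls_def by (auto intro: Least_le[THEN order_trans] less_imp_le)

lemma card_E_cls:
  assumes anz: "\<alpha> \<noteq> 0" and N: "1 \<le> N" "N \<le> m" and mt: "2 * m \<le> t"
  shows "card (Eset K lam \<alpha> N) = (if cls K lam m \<alpha> < N then card K ^ (N - cls K lam m \<alpha>) else 1)"
proof (cases "cls K lam m \<alpha> < N")
  case True
  hence ex: "\<exists>j<m. good K lam \<alpha> j" using N unfolding cls_def by (auto split: if_splits)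
  hence c: "cls K lam m \<alpha> = (LEAST j. good K lam \<alpha> j)" unfolding cls_def by simp
  obtain j0 where "good K lam \<alpha> j0" using ex by blast
  hence g: "good K lam \<alpha> (cls K lam m \<alpha>)" unfolding c by (rule LeastI)
  have mn: "\<forall>j<cls K lam m \<alpha>. \<not> good K lam \<alpha> j" unfolding c using not_less_Least by blast
  have "card (Eset K lam \<alpha> N) = card K ^ (N - cls K lam m \<alpha>)"
    by (rule key_E[OF sf cardL anz g mn True]) (use True N mt in simp)
  thus ?thesis using True by simp
next
  case False
  have "\<not> good K lam \<alpha> (N - 1)"
  proof
    assume g: "good K lam \<alpha> (N - 1)"
    hence ex: "\<exists>j<m. good K lam \<alpha> j" using N by (intro exI[of _ "N - 1"]) auto
    hence "cls K lam m \<alpha> = (LEAST j. good K lam \<alpha> j)" unfolding cls_def by simp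
    also have "\<dots> \<le> N - 1" using g by (rule Least_le)
    finally show False using False N by simp
  qed
  hence "Eset K lam \<alpha> N = {0}" using E_zero N by blast
  thus ?thesis using False by simp
qed

lemma pair_count:
  assumes Nt: "N \<le> t"
  shows "(\<Sum>\<alpha>\<in>field_adjoin K lam - {0}. card (Eset K lam \<alpha> N - {0})) = (card K ^ N - 1) * (card K ^ N - 1)"
proof -
  let ?L = "field_adjoin K lam"
  let ?W = "Wd K lam N"
  define A where "A = Sigma (?L - {0}) (\<lambda>\<alpha>. Eset K lam \<alpha> N - {0})"
  define B where "B = (?W - {0}) \<times> (?W - {0})"
  define f where "f = (\<lambda>(\<alpha>::'a, v::'a). (\<alpha> * v, v))"
  have Lsf: "is_subfield ?L" by (rule adj_subfield[OF sf])
  have WL: "?W \<subseteq> ?L" by (rule W_L[OF sf])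
  have inj: "inj_on f A"
  proof (rule inj_onI)
    fix x y assume "x \<in> A" "y \<in> A" "f x = f y"
    thus "x = y" unfolding A_def f_def by (cases x, cases y) auto
  qed
  have img: "f ` A = B"
  proof
    show "f ` A \<subseteq> B"
    proof (rule image_subsetI)
      fix x assume "x \<in> A"
      then obtain \<alpha> v where x: "x = (\<alpha>, v)" "\<alpha> \<noteq> 0" "v \<in> Eset K lam \<alpha> N" "v \<noteq> 0"
        unfolding A_def by auto
      thus "f x \<in> B" unfolding B_def f_def Eset_def by auto
    qed
  next
    show "B \<subseteq> f ` A"
    proof
      fix y assume "y \<in> B"
      then obtain u v where y: "y = (u, v)" "u \<in> ?W" "u \<noteq> 0" "v \<in> ?W" "v \<noteq> 0"
        unfolding B_def by auto
      define \<alpha> where "\<alpha> = u / v"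
      have aL: "\<alpha> \<in> ?L" unfolding \<alpha>_def using y WL by (intro sf_divide[OF Lsf]) auto
      have anz: "\<alpha> \<noteq> 0" unfolding \<alpha>_def using y by simp
      have av: "\<alpha> * v = u" unfolding \<alpha>_def using y by simp
      have "(\<alpha>, v) \<in> A" unfolding A_def Eset_def using aL anz av y by auto
      moreover have "f (\<alpha>, v) = y" unfolding f_def using av y by simp
      ultimately show "y \<in> f ` A" by (metis imageI)
    qed
  qed
  have "card A = (\<Sum>\<alpha>\<in>?L - {0}. card (Eset K lam \<alpha> N - {0}))"
    unfolding A_def by (rule card_SigmaI) auto
  moreover have "card A = card B" using card_image[OF inj] img by simp
  moreover have "card (?W - {0}) = card K ^ N - 1" using card_W[OF sf cardL Nt] W0 by simp
  ultimately show ?thesis unfolding B_def by (simp add: card_cartesian_product)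
qed

lemma group_count:
  assumes N: "1 \<le> N" "N \<le> m" and mt: "2 * m \<le> t"
  shows "(\<Sum>j<N. card {\<alpha> \<in> field_adjoin K lam - {0}. cls K lam m \<alpha> = j} * (card K ^ (N - j) - 1))
     = (card K ^ N - 1) * (card K ^ N - 1)"
proof -
  let ?L = "field_adjoin K lam"
  define g where "g j = (if j < N then card K ^ (N - j) - 1 else 0)" for j
  have "(\<Sum>\<alpha>\<in>?L - {0}. card (Eset K lam \<alpha> N - {0})) = (\<Sum>\<alpha>\<in>?L - {0}. g (cls K lam m \<alpha>))"
  proof (rule sum.cong)
    fix \<alpha> assume "\<alpha> \<in> ?L - {0}"
    hence "card (Eset K lam \<alpha> N) = (if cls K lam m \<alpha> < N then card K ^ (N - cls K lam m \<alpha>) else 1)"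
      using card_E_cls[OF _ N mt] by simp
    thus "card (Eset K lam \<alpha> N - {0}) = g (cls K lam m \<alpha>)" unfolding g_def using E0 by simp
  qed simp
  also have "\<dots> = (\<Sum>j\<in>{..m}. (\<Sum>\<alpha>\<in>{\<alpha> \<in> ?L - {0}. cls K lam m \<alpha> = j}. g (cls K lam m \<alpha>)))"
    by (rule sum.group[symmetric]) (auto intro: cls_le)
  also have "\<dots> = (\<Sum>j\<in>{..m}. card {\<alpha> \<in> ?L - {0}. cls K lam m \<alpha> = j} * g j)"
    by (intro sum.cong refl) simp
  also have "\<dots> = (\<Sum>j<N. card {\<alpha> \<in> ?L - {0}. cls K lam m \<alpha> = j} * g j)"
    using N by (intro sum.mono_neutral_right) (auto simp: g_def)
  also have "\<dots> = (\<Sum>j<N. card {\<alpha> \<in> ?L - {0}. cls K lam m \<alpha> = j} * (card K ^ (N - j) - 1))"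
    by (intro sum.cong refl) (simp add: g_def)
  finally show ?thesis using pair_count[of N] N mt by simp
qed

end

definition Cf :: "real \<Rightarrow> nat \<Rightarrow> real" where
  "Cf q j = (if j = 0 then q - 1 else (q^2 - 1) * q^(2*j - 1))"

lemma Cf_G: "(\<Sum>j<Suc M. Cf q j) = q^(2*M+1) - 1"
proof (induction M)
  case 0 thus ?case by (simp add: Cf_def)
next
  case (Suc M)
  have "(\<Sum>j<Suc (Suc M). Cf q j) = (\<Sum>j<Suc M. Cf q j) + Cf q (Suc M)" by simp
  also have "\<dots> = q^(2*M+1) - 1 + (q^2 - 1) * q^(2*M+1)" using Suc by (simp add: Cf_def)
  also have "\<dots> = q^(2 * Suc M + 1) - 1" by (simp add: algebra_simps power_add power2_eq_square)
  finally show ?case .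
qed

lemma Cf_F: "(\<Sum>j<Suc M. Cf q j * q^(Suc M - j)) = q^(2*M+2) + q^(2*M+1) - 2 * q^(M+1)"
proof (induction M)
  case 0 thus ?case by (simp add: Cf_def algebra_simps power2_eq_square)
next
  case (Suc M)
  have "(\<Sum>j<Suc (Suc M). Cf q j * q^(Suc (Suc M) - j))
      = (\<Sum>j<Suc M. Cf q j * q^(Suc (Suc M) - j)) + Cf q (Suc M) * q" by simp
  also have "(\<Sum>j<Suc M. Cf q j * q^(Suc (Suc M) - j)) = q * (\<Sum>j<Suc M. Cf q j * q^(Suc M - j))"
    unfolding sum_distrib_left by (intro sum.cong refl) (simp add: Suc_diff_le)
  also have "\<dots> = q * (q^(2*M+2) + q^(2*M+1) - 2 * q^(M+1))" using Suc by simp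
  finally show ?case by (simp add: Cf_def algebra_simps power_add power2_eq_square)
qed

lemma Cf_ident: "(\<Sum>j<Suc M. Cf q j * (q^(Suc M - j) - 1)) = (q^(Suc M) - 1)^2"
proof -
  have "(\<Sum>j<Suc M. Cf q j * (q^(Suc M - j) - 1))
      = (\<Sum>j<Suc M. Cf q j * q^(Suc M - j)) - (\<Sum>j<Suc M. Cf q j)"
    by (simp add: sum_subtractf right_diff_distrib)
  also have "\<dots> = (q^(Suc M) - 1)^2" unfolding Cf_F Cf_G
    apply (simp add: algebra_simps power2_eq_square power_add)
    apply (rule disjI2)
    by (simp add: power_mult power2_eq_square)
  finally show ?thesis .
qed

lemma solve_counts:
  fixes c :: "nat \<Rightarrow> nat" and q m :: nat
  assumes q: "q \<ge> 2"
    and eqs: "\<And>N. 1 \<le> N \<Longrightarrow> N \<le> m \<Longrightarrow> (\<Sum>j<N. c j * (q^(N-j) - 1)) = (q^N - 1) * (q^N - 1)"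
  shows "j < m \<Longrightarrow> real (c j) = Cf (real q) j"
proof (induction j rule: less_induct)
  case (less j)
  have qpos: "q^k \<ge> 1" for k using q by simp
  have A: "real (q^k - 1) = real q^k - 1" for k using qpos[of k] by (simp add: of_nat_diff)
  have "real (\<Sum>i<Suc j. c i * (q^(Suc j - i) - 1)) = real ((q^Suc j - 1) * (q^Suc j - 1))"
    using eqs[of "Suc j"] less.prems by simp
  hence "(\<Sum>i<Suc j. real (c i) * real (q^(Suc j - i) - 1)) = real (q^Suc j - 1) * real (q^Suc j - 1)"
    by (simp only: of_nat_sum of_nat_mult)
  hence "(\<Sum>i<Suc j. real (c i) * (real q^(Suc j - i) - 1)) = (real q^Suc j - 1)^2"
    by (simp only: A power2_eq_square)
  hence 1: "(\<Sum>i<j. real (c i) * (real q^(Suc j - i) - 1)) + real (c j) * (real q - 1)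
      = (real q^Suc j - 1)^2" by simp
  have "(\<Sum>i<j. real (c i) * (real q^(Suc j - i) - 1)) = (\<Sum>i<j. Cf (real q) i * (real q^(Suc j - i) - 1))"
    using less.IH less.prems by (intro sum.cong refl) auto
  moreover have "(\<Sum>i<j. Cf (real q) i * (real q^(Suc j - i) - 1)) + Cf (real q) j * (real q - 1)
      = (real q^Suc j - 1)^2" using Cf_ident[of "real q" j] by simp
  ultimately have "real (c j) * (real q - 1) = Cf (real q) j * (real q - 1)" using 1 by linarith
  moreover have "real q - 1 \<noteq> 0" using q by simp
  ultimately show ?case by (metis mult_right_cancel)
qed

lemma ss_image_mult: "is_subspace K V \<Longrightarrow> is_subspace K ((\<lambda>x. \<alpha> * x) ` V)"
  unfolding is_subspace_def
proof (intro conjI ballI)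
  assume V: "0 \<in> V \<and> (\<forall>x\<in>V. \<forall>y\<in>V. x + y \<in> V) \<and> (\<forall>c\<in>K. \<forall>x\<in>V. c * x \<in> V)"
  show "0 \<in> (\<lambda>x. \<alpha> * x) ` V" using V by (intro image_eqI[of _ _ 0]) auto
  fix x y assume "x \<in> (\<lambda>x. \<alpha> * x) ` V" "y \<in> (\<lambda>x. \<alpha> * x) ` V"
  then obtain x' y' where "x' \<in> V" "y' \<in> V" "x = \<alpha> * x'" "y = \<alpha> * y'" by blast
  thus "x + y \<in> (\<lambda>x. \<alpha> * x) ` V" using V by (intro image_eqI[of _ _ "x' + y'"]) (auto simp: algebra_simps)
next
  assume V: "0 \<in> V \<and> (\<forall>x\<in>V. \<forall>y\<in>V. x + y \<in> V) \<and> (\<forall>c\<in>K. \<forall>x\<in>V. c * x \<in> V)"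
  fix c x assume "c \<in> K" "x \<in> (\<lambda>x. \<alpha> * x) ` V"
  then obtain x' where "x' \<in> V" "x = \<alpha> * x'" by blast
  thus "c * x \<in> (\<lambda>x. \<alpha> * x) ` V" using V \<open>c \<in> K\<close>
    by (intro image_eqI[of _ _ "c * x'"]) (auto simp: algebra_simps)
qed

lemma ss_Int: "is_subspace K U \<Longrightarrow> is_subspace K V \<Longrightarrow> is_subspace K (U \<inter> V)"
  unfolding is_subspace_def by auto

lemma ss_mono: "K \<subseteq> L \<Longrightarrow> is_subspace L V \<Longrightarrow> is_subspace K V"
  unfolding is_subspace_def by blast

lemma card_mult_image_eq:
  fixes \<alpha> :: "'a::field" shows "\<alpha> \<noteq> 0 \<Longrightarrow> card ((\<lambda>x. \<alpha> * x) ` V) = card V"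
  by (intro card_image inj_onI) auto

lemma product_formula:
  fixes K :: "'a::{field,finite} set"
  assumes sf: "is_subfield K" and U: "is_subspace K U" and A: "is_subspace K A"
  shows "card U * card A = card {u + a | u a. u \<in> U \<and> a \<in> A} * card (U \<inter> A)"
proof -
  define P where "P = {u + a | u a. u \<in> U \<and> a \<in> A}"
  define g where "g = (\<lambda>(u::'a, a::'a). u + a)"
  have gi: "g ` (U \<times> A) \<subseteq> P" unfolding g_def P_def by auto
  have fib: "card {x \<in> U \<times> A. g x = z} = card (U \<inter> A)" if "z \<in> P" for z
  proof -
    obtain u0 a0 where z: "z = u0 + a0" "u0 \<in> U" "a0 \<in> A" using \<open>z \<in> P\<close> unfolding P_def by blast
    have "{x \<in> U \<times> A. g x = z} = (\<lambda>c. (u0 + c, a0 - c)) ` (U \<inter> A)"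
    proof
      show "{x \<in> U \<times> A. g x = z} \<subseteq> (\<lambda>c. (u0 + c, a0 - c)) ` (U \<inter> A)"
      proof
        fix x assume x: "x \<in> {x \<in> U \<times> A. g x = z}"
        then obtain u a where ua: "x = (u, a)" "u \<in> U" "a \<in> A" "u + a = u0 + a0"
          unfolding g_def z by auto
        have "u - u0 \<in> U" using ss_diff[OF sf U ua(2) z(2)] .
        moreover have "u - u0 = a0 - a" using ua(4) by (simp add: algebra_simps)
        moreover have "a0 - a \<in> A" using ss_diff[OF sf A z(3) ua(3)] .
        ultimately have "u - u0 \<in> U \<inter> A" by simp
        moreover have "x = (u0 + (u - u0), a0 - (u - u0))" using ua by (simp add: algebra_simps)
        ultimately show "x \<in> (\<lambda>c. (u0 + c, a0 - c)) ` (U \<inter> A)" by (intro image_eqI) auto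
      qed
    next
      show "(\<lambda>c. (u0 + c, a0 - c)) ` (U \<inter> A) \<subseteq> {x \<in> U \<times> A. g x = z}"
      proof (rule image_subsetI)
        fix c assume "c \<in> U \<inter> A"
        hence "u0 + c \<in> U" "a0 - c \<in> A" using U A z ss_diff[OF sf A z(3)] unfolding is_subspace_def by auto
        thus "(u0 + c, a0 - c) \<in> {x \<in> U \<times> A. g x = z}" unfolding g_def z by simp
      qed
    qed
    also have "card \<dots> = card (U \<inter> A)" by (intro card_image inj_onI) auto
    finally show ?thesis .
  qed
  have "card U * card A = card (U \<times> A)" by (simp add: card_cartesian_product)
  also have "\<dots> = (\<Sum>x\<in>U \<times> A. 1)" by simp
  also have "\<dots> = (\<Sum>z\<in>P. (\<Sum>x\<in>{x \<in> U \<times> A. g x = z}. 1))"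
    by (rule sum.group[symmetric]) (use gi in auto)
  also have "\<dots> = (\<Sum>z\<in>P. card (U \<inter> A))" by (intro sum.cong refl) (simp add: fib)
  also have "\<dots> = card P * card (U \<inter> A)" by simp
  finally show ?thesis unfolding P_def .
qed

lemma index_bound:
  fixes K :: "'a::{field,finite} set"
  assumes sf: "is_subfield K" and U: "is_subspace K U" and A: "is_subspace K A"
    and B: "is_subspace K B" and UB: "U \<subseteq> B" and AB: "A \<subseteq> B"
  shows "card U * card A \<le> card B * card (U \<inter> A)"
proof -
  have "{u + a | u a. u \<in> U \<and> a \<in> A} \<subseteq> B" using UB AB B unfolding is_subspace_def by blast
  hence "card {u + a | u a. u \<in> U \<and> a \<in> A} \<le> card B" by (intro card_mono) auto
  thus ?thesis unfolding product_formula[OF sf U A] by (intro mult_right_mono) auto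
qed

lemma fiber_count:
  fixes f :: "'b \<Rightarrow> 'c"
  assumes "finite A" "\<And>V. V \<in> f ` A \<Longrightarrow> card {x \<in> A. f x = V} = c"
  shows "card A = card (f ` A) * c"
proof -
  have "card A = (\<Sum>x\<in>A. 1)" by simp
  also have "\<dots> = (\<Sum>V\<in>f ` A. (\<Sum>x\<in>{x \<in> A. f x = V}. 1))"
    by (rule sum.group[symmetric]) (use assms(1) in auto)
  also have "\<dots> = (\<Sum>V\<in>f ` A. c)" using assms(2) by (intro sum.cong refl) simp
  finally show ?thesis by simp
qed

context
  fixes Fq :: "'a::{field,finite} set" and q n t l m k r :: nat
    and lam b :: 'a and Sbar S :: "'a set"
  assumes q_pp: "\<exists>p e. prime p \<and> e > 0 \<and> q = p ^ e"
    and card_field: "card (UNIV :: 'a set) = q ^ n"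
    and Fq_sub: "is_subfield Fq" and Fq_card: "card Fq = q"
    and lam: "lam \<notin> Fq"
    and t_def: "t = dim_over Fq (field_adjoin Fq lam)"
    and Sbar_sub: "is_subspace (field_adjoin Fq lam) Sbar"
    and Sbar_dim: "dim_over (field_adjoin Fq lam) Sbar = l" and l_pos: "l > 0"
    and b_nz: "b \<noteq> 0"
    and b_Sbar: "field_adjoin Fq lam \<inter> (\<lambda>x. b * x) ` Sbar = {0}"
    and m_bounds: "0 < m" "m < t"
    and k_def: "k = t * l + m" and k_bounds: "t + 1 \<le> k" "k \<le> n"
    and S_def: "S = {x + b * w | x w. x \<in> Sbar \<and> w \<in> span_over Fq {lam ^ j | j. j < m}}"
    and S_direct: "Sbar \<inter> (\<lambda>w. b * w) ` span_over Fq {lam ^ j | j. j < m} = {0}"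
    and Y_full: "span_over (field_adjoin Fq lam) S = UNIV"
    and m_t: "2 * m + 1 \<ge> t"
    and r_def: "r = 2 * m + t * (l - 1)"
    and FWS: "is_FWS Fq k S r"
    and r_eq: "r = t * l - 1"
begin

abbreviation "L \<equiv> field_adjoin Fq lam"
abbreviation "W \<equiv> Wd Fq lam m"

lemma sfK: "is_subfield Fq" by (rule Fq_sub)
lemma sfL: "is_subfield L" by (rule adj_subfield[OF Fq_sub])
lemma KL: "Fq \<subseteq> L" by (rule adj_K)
lemma q2: "q \<ge> 2" using sf_card_ge2[OF Fq_sub] Fq_card by simp
lemma cardL: "card L = q ^ t"
  using dim_card[OF Fq_sub subfield_subspace[OF sfL KL]] t_def Fq_card by simp
lemma cardSbar: "card Sbar = q ^ (t * l)"
  using dim_card[OF sfL Sbar_sub] Sbar_dim cardL by (simp add: power_mult)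
lemma t_eq: "t = 2 * m + 1"
proof -
  obtain l' where l': "l = Suc l'" using l_pos by (cases l) auto
  have "2 * m + t * l' = t + t * l' - 1" using r_def r_eq l' by simp
  thus ?thesis using m_bounds by simp
qed
lemma mt: "2 * m \<le> t" using t_eq by simp
lemma cardLK: "card (field_adjoin Fq lam) = card Fq ^ t" using cardL Fq_card by simp
lemma W_eq: "span_over Fq {lam ^ j | j. j < m} = W" using W_span[OF Fq_sub] by simp
lemma S_eq: "S = {x + b * w | x w. x \<in> Sbar \<and> w \<in> W}" using S_def W_eq by simp
lemma WL: "W \<subseteq> L" by (rule W_L[OF Fq_sub])
lemma cardW: "card W = q ^ m" using card_W[OF Fq_sub cardLK] m_bounds Fq_card by simp
lemma Wss: "is_subspace Fq W" by (rule W_subspace[OF Fq_sub])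
lemma W_add: "w1 \<in> W \<Longrightarrow> w2 \<in> W \<Longrightarrow> w1 + w2 \<in> W" using Wss unfolding is_subspace_def by blast
lemma W_smult: "c \<in> Fq \<Longrightarrow> w1 \<in> W \<Longrightarrow> c * w1 \<in> W" using Wss unfolding is_subspace_def by blast
lemma W_0: "0 \<in> W" using Wss unfolding is_subspace_def by blast
lemma SbarK: "is_subspace Fq Sbar" using ss_mono[OF KL Sbar_sub] .
lemma Sbar_L: "c \<in> L \<Longrightarrow> x \<in> Sbar \<Longrightarrow> c * x \<in> Sbar" using Sbar_sub unfolding is_subspace_def by blast
lemma Sbar0: "0 \<in> Sbar" using Sbar_sub unfolding is_subspace_def by blast
lemma Sbar_add: "x \<in> Sbar \<Longrightarrow> y \<in> Sbar \<Longrightarrow> x + y \<in> Sbar" using Sbar_sub unfolding is_subspace_def by blast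

lemma powq_inj: "q ^ a = q ^ c \<longleftrightarrow> a = c" using q2 by (simp add: power_inject_exp)
lemma powq_less: "q ^ a < q ^ c \<longleftrightarrow> a < c" using q2 by (simp add: power_strict_increasing_iff)
lemma powq_le: "q ^ a \<le> q ^ c \<longleftrightarrow> a \<le> c" using q2 by (simp add: power_increasing_iff)

lemma mem_img2: "z \<in> (\<lambda>(x, c). x + b * c) ` (A \<times> B) \<longleftrightarrow> (\<exists>x\<in>A. \<exists>c\<in>B. z = x + b * c)"
  by (auto simp: image_iff)

lemma uniq:
  assumes "x1 \<in> Sbar" "x2 \<in> Sbar" "w1 \<in> L" "w2 \<in> L" "x1 + b * w1 = x2 + b * w2"
  shows "x1 = x2 \<and> w1 = w2"
proof (cases "w1 = w2")
  case True thus ?thesis using assms(5) by simp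
next
  case False
  define c where "c = w2 - w1"
  have cL: "c \<in> L" unfolding c_def using sf_diff[OF sfL assms(4,3)] .
  have cnz: "c \<noteq> 0" using False unfolding c_def by simp
  have "b * c = x1 - x2" using assms(5) unfolding c_def by (simp add: algebra_simps)
  hence "b * c \<in> Sbar" using ss_diff[OF sfL Sbar_sub assms(1,2)] by simp
  hence "inverse c * (b * c) \<in> Sbar" using Sbar_L sf_inverse[OF sfL cL] by blast
  hence bS: "b \<in> Sbar" using cnz by (simp add: field_simps)
  have "S \<subseteq> Sbar"
  proof
    fix z assume "z \<in> S"
    then obtain x w where "z = x + b * w" "x \<in> Sbar" "w \<in> W" unfolding S_eq by blast
    moreover have "w * b \<in> Sbar" using Sbar_L[OF _ bS] \<open>w \<in> W\<close> WL by blast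
    ultimately show "z \<in> Sbar" using Sbar_add by (simp add: mult.commute)
  qed
  hence "UNIV \<subseteq> Sbar" using span_least[OF Sbar_sub] Y_full by blast
  hence "Sbar = UNIV" by blast
  hence "q ^ n = q ^ (t * l)" using card_field cardSbar by simp
  hence "n = t * l" using powq_inj by simp
  thus ?thesis using k_def k_bounds m_bounds by simp
qed

lemma cardS: "card S = q ^ k"
proof -
  have "S = (\<lambda>(x, w). x + b * w) ` (Sbar \<times> W)" unfolding S_eq by auto
  moreover have "inj_on (\<lambda>(x, w). x + b * w) (Sbar \<times> W)"
  proof (rule inj_onI)
    fix p p' assume "p \<in> Sbar \<times> W" "p' \<in> Sbar \<times> W" "(\<lambda>(x, w). x + b * w) p = (\<lambda>(x, w). x + b * w) p'"
    thus "p = p'" using uniq[of "fst p" "fst p'" "snd p" "snd p'"] WL by (cases p, cases p') auto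
  qed
  ultimately have "card S = card (Sbar \<times> W)" by (simp add: card_image)
  thus ?thesis using cardSbar cardW k_def by (simp add: card_cartesian_product power_add)
qed

lemma n_eq: "n = t * (l + 1)"
proof -
  define T where "T = (\<lambda>(x, c). x + b * c) ` (Sbar \<times> L)"
  have Tss: "is_subspace L T" unfolding is_subspace_def
  proof (intro conjI ballI)
    show "0 \<in> T" unfolding T_def using Sbar0 sf_0[OF sfL] by (intro image_eqI[of _ _ "(0, 0)"]) auto
  next
    fix y z assume "y \<in> T" "z \<in> T"
    then obtain x1 c1 x2 c2 where "y = x1 + b * c1" "z = x2 + b * c2" "x1 \<in> Sbar" "x2 \<in> Sbar" "c1 \<in> L" "c2 \<in> L"
      unfolding T_def mem_img2 by blast
    thus "y + z \<in> T" unfolding T_def using Sbar_add sf_add[OF sfL]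
      by (intro image_eqI[of _ _ "(x1 + x2, c1 + c2)"]) (auto simp: algebra_simps)
  next
    fix a z assume "a \<in> L" "z \<in> T"
    then obtain x1 c1 where "z = x1 + b * c1" "x1 \<in> Sbar" "c1 \<in> L" unfolding T_def mem_img2 by blast
    thus "a * z \<in> T" unfolding T_def using Sbar_L sf_mult[OF sfL] \<open>a \<in> L\<close>
      by (intro image_eqI[of _ _ "(a * x1, a * c1)"]) (auto simp: algebra_simps)
  qed
  have "S \<subseteq> T" unfolding S_eq T_def using WL by auto
  hence "UNIV \<subseteq> T" using span_least[OF Tss] Y_full by blast
  hence "T = UNIV" by blast
  moreover have "inj_on (\<lambda>(x, c). x + b * c) (Sbar \<times> L)"
  proof (rule inj_onI)
    fix p p' assume "p \<in> Sbar \<times> L" "p' \<in> Sbar \<times> L" "(\<lambda>(x, c). x + b * c) p = (\<lambda>(x, c). x + b * c) p'"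
    thus "p = p'" using uniq[of "fst p" "fst p'" "snd p" "snd p'"] by (cases p, cases p') auto
  qed
  ultimately have "card (UNIV :: 'a set) = card (Sbar \<times> L)"
    using card_image[of "\<lambda>(x, c). x + b * c" "Sbar \<times> L"] unfolding T_def by simp
  hence "q ^ n = q ^ (t * l + t)" using card_field cardSbar cardL by (simp add: card_cartesian_product power_add)
  thus ?thesis using powq_inj by (simp add: algebra_simps)
qed

lemma SK: "is_subspace Fq S" unfolding is_subspace_def S_eq
proof (intro conjI ballI)
  show "0 \<in> {x + b * w | x w. x \<in> Sbar \<and> w \<in> W}" using Sbar0 W_0
    by (intro CollectI exI[of _ 0] exI[of _ 0]) simp
next
  fix y z assume "y \<in> {x + b * w | x w. x \<in> Sbar \<and> w \<in> W}" "z \<in> {x + b * w | x w. x \<in> Sbar \<and> w \<in> W}"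
  then obtain x1 w1 x2 w2 where "y = x1 + b * w1" "z = x2 + b * w2" "x1 \<in> Sbar" "x2 \<in> Sbar" "w1 \<in> W" "w2 \<in> W"
    by blast
  moreover have "x1 + x2 \<in> Sbar" "w1 + w2 \<in> W" using calculation Sbar_add W_add by auto
  ultimately show "y + z \<in> {x + b * w | x w. x \<in> Sbar \<and> w \<in> W}"
    by (intro CollectI exI[of _ "x1 + x2"] exI[of _ "w1 + w2"]) (auto simp: algebra_simps)
next
  fix c z assume "c \<in> Fq" "z \<in> {x + b * w | x w. x \<in> Sbar \<and> w \<in> W}"
  then obtain x1 w1 where "z = x1 + b * w1" "x1 \<in> Sbar" "w1 \<in> W" by blast
  moreover have "c * x1 \<in> Sbar" "c * w1 \<in> W" using calculation \<open>c \<in> Fq\<close> Sbar_L KL W_smult by auto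
  ultimately show "c * z \<in> {x + b * w | x w. x \<in> Sbar \<and> w \<in> W}"
    by (intro CollectI exI[of _ "c * x1"] exI[of _ "c * w1"]) (auto simp: algebra_simps)
qed


lemma finS: "finite (X :: 'a set)" by simp

lemma SbarS: "Sbar \<subseteq> S"
proof
  fix x assume "x \<in> Sbar"
  thus "x \<in> S" unfolding S_eq using W_0 by (intro CollectI exI[of _ x] exI[of _ 0]) simp
qed

lemma scale_eq:
  assumes "is_subspace L V" "\<alpha> \<in> L" "\<alpha> \<noteq> 0" shows "(\<lambda>x. \<alpha> * x) ` V = V"
proof -
  have "(\<lambda>x. \<alpha> * x) ` V \<subseteq> V" using assms unfolding is_subspace_def by blast
  moreover have "card ((\<lambda>x. \<alpha> * x) ` V) = card V" using card_mult_image_eq assms(3) by blast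
  ultimately show ?thesis by (intro card_subset_eq) auto
qed

lemma inter_L:
  assumes aL: "\<alpha> \<in> L" and anz: "\<alpha> \<noteq> 0"
  shows "S \<inter> (\<lambda>x. \<alpha> * x) ` S = (\<lambda>(x, w). x + b * w) ` (Sbar \<times> (W \<inter> (\<lambda>x. \<alpha> * x) ` W))"
proof
  show "S \<inter> (\<lambda>x. \<alpha> * x) ` S \<subseteq> (\<lambda>(x, w). x + b * w) ` (Sbar \<times> (W \<inter> (\<lambda>x. \<alpha> * x) ` W))"
  proof
    fix z assume z: "z \<in> S \<inter> (\<lambda>x. \<alpha> * x) ` S"
    then obtain z' where z': "z' \<in> S" "z = \<alpha> * z'" by blast
    obtain x1 w1 where 1: "z = x1 + b * w1" "x1 \<in> Sbar" "w1 \<in> W" using z unfolding S_eq by blast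
    obtain x2 w2 where 2: "z' = x2 + b * w2" "x2 \<in> Sbar" "w2 \<in> W" using z'(1) unfolding S_eq by blast
    have "z = \<alpha> * x2 + b * (\<alpha> * w2)" using z'(2) 2(1) by (simp add: algebra_simps)
    moreover have "\<alpha> * x2 \<in> Sbar" using Sbar_L[OF aL 2(2)] .
    moreover have "\<alpha> * w2 \<in> L" using sf_mult[OF sfL aL] 2(3) WL by blast
    ultimately have "w1 = \<alpha> * w2" using uniq[of x1 "\<alpha> * x2" w1 "\<alpha> * w2"] 1 WL by auto
    hence "w1 \<in> W \<inter> (\<lambda>x. \<alpha> * x) ` W" using 1(3) 2(3) by blast
    thus "z \<in> (\<lambda>(x, w). x + b * w) ` (Sbar \<times> (W \<inter> (\<lambda>x. \<alpha> * x) ` W))"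
      unfolding mem_img2 using 1 by blast
  qed
next
  show "(\<lambda>(x, w). x + b * w) ` (Sbar \<times> (W \<inter> (\<lambda>x. \<alpha> * x) ` W)) \<subseteq> S \<inter> (\<lambda>x. \<alpha> * x) ` S"
  proof
    fix z assume "z \<in> (\<lambda>(x, w). x + b * w) ` (Sbar \<times> (W \<inter> (\<lambda>x. \<alpha> * x) ` W))"
    then obtain x w where xw: "z = x + b * w" "x \<in> Sbar" "w \<in> W" "w \<in> (\<lambda>x. \<alpha> * x) ` W"
      unfolding mem_img2 by blast
    then obtain w' where w': "w' \<in> W" "w = \<alpha> * w'" by blast
    have zS: "z \<in> S" unfolding S_eq using xw by blast
    have xi: "inverse \<alpha> * x \<in> Sbar" using Sbar_L[OF sf_inverse[OF sfL aL] xw(2)] .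
    have "inverse \<alpha> * x + b * w' \<in> S" unfolding S_eq using xi w'(1) by blast
    moreover have "z = \<alpha> * (inverse \<alpha> * x + b * w')" using xw(1) w'(2) anz by (simp add: algebra_simps)
    ultimately have "z \<in> (\<lambda>x. \<alpha> * x) ` S" by blast
    thus "z \<in> S \<inter> (\<lambda>x. \<alpha> * x) ` S" using zS by blast
  qed
qed

lemma card_int_L:
  assumes aL: "\<alpha> \<in> L" and anz: "\<alpha> \<noteq> 0"
  shows "card (S \<inter> (\<lambda>x. \<alpha> * x) ` S) = q ^ (k - cls Fq lam m \<alpha>)"
proof -
  have inj: "inj_on (\<lambda>(x, w). x + b * w) (Sbar \<times> (W \<inter> (\<lambda>x. \<alpha> * x) ` W))"
  proof (rule inj_onI)
    fix p p' assume "p \<in> Sbar \<times> (W \<inter> (\<lambda>x. \<alpha> * x) ` W)" "p' \<in> Sbar \<times> (W \<inter> (\<lambda>x. \<alpha> * x) ` W)"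
      "(\<lambda>(x, w). x + b * w) p = (\<lambda>(x, w). x + b * w) p'"
    thus "p = p'" using uniq[of "fst p" "fst p'" "snd p" "snd p'"] WL by (cases p, cases p') auto
  qed
  have WE: "W \<inter> (\<lambda>x. \<alpha> * x) ` W = (\<lambda>v. \<alpha> * v) ` Eset Fq lam \<alpha> m" unfolding Eset_def by auto
  have "card (W \<inter> (\<lambda>x. \<alpha> * x) ` W) = card (Eset Fq lam \<alpha> m)"
    unfolding WE using card_mult_image_eq anz by blast
  also have "\<dots> = (if cls Fq lam m \<alpha> < m then card Fq ^ (m - cls Fq lam m \<alpha>) else 1)"
    using card_E_cls[OF Fq_sub cardLK anz _ _ mt] m_bounds by simp
  also have "\<dots> = q ^ (m - cls Fq lam m \<alpha>)" using cls_le[OF Fq_sub cardLK, of m \<alpha>] Fq_card by auto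
  finally have cW: "card (W \<inter> (\<lambda>x. \<alpha> * x) ` W) = q ^ (m - cls Fq lam m \<alpha>)" .
  have "card (S \<inter> (\<lambda>x. \<alpha> * x) ` S) = card (Sbar \<times> (W \<inter> (\<lambda>x. \<alpha> * x) ` W))"
    unfolding inter_L[OF aL anz] using card_image[OF inj] by simp
  also have "\<dots> = q ^ (t * l) * q ^ (m - cls Fq lam m \<alpha>)" using cardSbar cW by (simp add: card_cartesian_product)
  also have "\<dots> = q ^ (k - cls Fq lam m \<alpha>)" using cls_le[OF Fq_sub cardLK, of m \<alpha>] k_def by (simp add: power_add[symmetric])
  finally show ?thesis .
qed

lemma Sbar_not_stable:
  assumes aL: "\<alpha> \<notin> L" shows "(\<lambda>x. \<alpha> * x) ` Sbar \<noteq> Sbar"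
proof
  assume eq: "(\<lambda>x. \<alpha> * x) ` Sbar = Sbar"
  define M where "M = {\<gamma>. (\<lambda>x. \<gamma> * x) ` Sbar \<subseteq> Sbar}"
  have stab: "\<gamma> * x \<in> Sbar" if "\<gamma> \<in> M" "x \<in> Sbar" for \<gamma> x using that unfolding M_def by blast
  have stabI: "\<gamma> \<in> M" if "\<And>x. x \<in> Sbar \<Longrightarrow> \<gamma> * x \<in> Sbar" for \<gamma> using that unfolding M_def by blast
  have LM: "L \<subseteq> M" using Sbar_L stabI by blast
  have aM: "\<alpha> \<in> M" using eq unfolding M_def by simp
  have Msf: "is_subfield M" unfolding is_subfield_def
  proof (intro conjI ballI impI)
    show "0 \<in> M" using Sbar0 by (intro stabI) simp
    show "1 \<in> M" by (intro stabI) simp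
  next
    fix x y assume "x \<in> M" "y \<in> M"
    thus "x + y \<in> M" "x * y \<in> M" using stab Sbar_add by (auto intro!: stabI simp: distrib_right mult.assoc)
  next
    fix x assume "x \<in> M"
    thus "- x \<in> M" using stab ss_uminus[OF sfL Sbar_sub] by (auto intro!: stabI)
  next
    fix x assume xM: "x \<in> M" and xnz: "x \<noteq> 0"
    have img: "(\<lambda>y. x * y) ` Sbar = Sbar"
    proof -
      have "(\<lambda>y. x * y) ` Sbar \<subseteq> Sbar" using stab xM by blast
      moreover have "card ((\<lambda>y. x * y) ` Sbar) = card Sbar" using card_mult_image_eq xnz by blast
      ultimately show ?thesis by (intro card_subset_eq) auto
    qed
    show "inverse x \<in> M"
    proof (rule stabI)
      fix z assume "z \<in> Sbar"
      then obtain y where "y \<in> Sbar" "z = x * y" using img by (metis imageE)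
      thus "inverse x * z \<in> Sbar" using xnz by (simp add: mult.assoc[symmetric])
    qed
  qed
  have cM: "card M = card L ^ dim_over L M" using dim_card[OF sfL subfield_subspace[OF Msf LM]] .
  define s where "s = dim_over L M"
  have "card L < card M" using LM aM aL by (intro psubset_card_mono) auto
  hence "q ^ t < q ^ (t * s)" using cM cardL s_def by (simp add: power_mult)
  hence ts: "t < t * s" using powq_less by simp
  have s1: "\<not> s \<le> 1"
  proof
    assume "s \<le> 1" hence "t * s \<le> t * 1" by (rule mult_le_mono2)
    thus False using ts by simp
  qed
  have MSbar: "is_subspace M Sbar" unfolding is_subspace_def using Sbar0 Sbar_add stab by blast
  have MU: "is_subspace M (UNIV :: 'a set)" unfolding is_subspace_def by simp
  have "card Sbar = card M ^ dim_over M Sbar" by (rule dim_card[OF Msf MSbar])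
  hence "q ^ (t * l) = q ^ (t * s * dim_over M Sbar)" using cardSbar cM cardL s_def by (simp add: power_mult)
  hence e1: "l = s * dim_over M Sbar" using powq_inj m_bounds by simp
  have "card (UNIV :: 'a set) = card M ^ dim_over M UNIV" by (rule dim_card[OF Msf MU])
  hence "q ^ (t * (l + 1)) = q ^ (t * s * dim_over M UNIV)" using card_field n_eq cM cardL s_def by (simp add: power_mult)
  hence tt: "t * (l + 1) = t * (s * dim_over M UNIV)" using powq_inj by (simp only: mult.assoc)
  have tnz: "t \<noteq> 0" using m_bounds by simp
  have e2: "l + 1 = s * dim_over M UNIV" using tt tnz by (metis mult_cancel_left)
  have "s dvd 1" using e1 e2 by (metis dvd_add_right_iff dvd_triv_left)
  thus False using s1 s_def by simp
qed


lemma r_val: "r = 2 * m + t * (l - 1)" "r = t * l - 1" using r_def r_eq by auto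

lemma card_int_nonL_le:
  assumes aL: "\<alpha> \<notin> L" shows "card (S \<inter> (\<lambda>x. \<alpha> * x) ` S) \<le> q ^ (t * l - 1)"
proof -
  have anz: "\<alpha> \<noteq> 0" using aL sf_0[OF sfL] by auto
  define U where "U = S \<inter> (\<lambda>x. \<alpha> * x) ` S"
  define aS where "aS = (\<lambda>x. \<alpha> * x) ` S"
  define aSbar where "aSbar = (\<lambda>x. \<alpha> * x) ` Sbar"
  have aSK: "is_subspace Fq aS" unfolding aS_def by (rule ss_image_mult[OF SK])
  have UK: "is_subspace Fq U" unfolding U_def by (rule ss_Int[OF SK ss_image_mult[OF SK]])
  have aSbarK: "is_subspace Fq aSbar" unfolding aSbar_def by (rule ss_image_mult[OF SbarK])
  have aSbarL: "is_subspace L aSbar" unfolding aSbar_def by (rule ss_image_mult[OF Sbar_sub])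
  have caS: "card aS = q ^ k" unfolding aS_def using card_mult_image_eq[OF anz] cardS by simp
  have caSbar: "card aSbar = q ^ (t * l)" unfolding aSbar_def using card_mult_image_eq[OF anz] cardSbar by simp
  have "card U * card Sbar \<le> card S * card (U \<inter> Sbar)"
    by (rule index_bound[OF Fq_sub UK SbarK SK]) (use SbarS U_def in auto)
  hence "card U * q ^ (t * l) \<le> (q ^ m * card (U \<inter> Sbar)) * q ^ (t * l)"
    using cardS cardSbar k_def by (simp add: power_add algebra_simps)
  hence i1: "card U \<le> q ^ m * card (U \<inter> Sbar)" using q2 by simp
  have "card (U \<inter> Sbar) * card aSbar \<le> card aS * card ((U \<inter> Sbar) \<inter> aSbar)"
    by (rule index_bound[OF Fq_sub ss_Int[OF UK SbarK] aSbarK aSK])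
      (use U_def aS_def aSbar_def SbarS in auto)
  hence "card (U \<inter> Sbar) * q ^ (t * l) \<le> (q ^ m * card ((U \<inter> Sbar) \<inter> aSbar)) * q ^ (t * l)"
    using caS caSbar k_def by (simp add: power_add algebra_simps)
  hence i2: "card (U \<inter> Sbar) \<le> q ^ m * card ((U \<inter> Sbar) \<inter> aSbar)" using q2 by simp
  have "card ((U \<inter> Sbar) \<inter> aSbar) \<le> card (Sbar \<inter> aSbar)" by (intro card_mono) auto
  moreover have "card (Sbar \<inter> aSbar) \<le> q ^ (t * (l - 1))"
  proof -
    have IL: "is_subspace L (Sbar \<inter> aSbar)" by (rule ss_Int[OF Sbar_sub aSbarL])
    define d where "d = dim_over L (Sbar \<inter> aSbar)"
    have cI: "card (Sbar \<inter> aSbar) = q ^ (t * d)"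
      using dim_card[OF sfL IL] cardL d_def by (simp add: power_mult)
    have "Sbar \<inter> aSbar \<noteq> Sbar"
    proof
      assume "Sbar \<inter> aSbar = Sbar"
      hence "Sbar \<subseteq> aSbar" by blast
      hence "Sbar = aSbar" using caSbar cardSbar by (intro card_subset_eq) auto
      thus False using Sbar_not_stable[OF aL] aSbar_def by simp
    qed
    hence "card (Sbar \<inter> aSbar) < card Sbar" by (intro psubset_card_mono) auto
    hence "t * d < t * l" using cI cardSbar powq_less by simp
    hence "d < l" by simp
    hence "d \<le> l - 1" by simp
    hence "t * d \<le> t * (l - 1)" by (rule mult_le_mono2)
    thus ?thesis using cI powq_le by simp
  qed
  ultimately have "card U \<le> q ^ m * (q ^ m * q ^ (t * (l - 1)))" using i1 i2
    by (meson le_trans mult_le_mono2)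
  also have "\<dots> = q ^ r" using r_val(1) by (simp add: power_add mult_2)
  finally show ?thesis using r_val(2) U_def by simp
qed

lemma dist_eq:
  assumes "is_subspace Fq V" "card (S \<inter> V) = q ^ d" "d \<le> k"
  shows "subspace_dist Fq k S V = 2 * (k - d)"
proof -
  have "dim_over Fq (S \<inter> V) = d"
    using dim_unique[OF Fq_sub ss_Int[OF SK assms(1)]] assms(2) Fq_card by simp
  thus ?thesis unfolding subspace_dist_def using assms(3) by simp
qed

lemma orb_mem: "\<alpha> \<noteq> 0 \<Longrightarrow> (\<lambda>x. \<alpha> * x) ` S \<in> Orb S" unfolding Orb_def by blast

lemma card_int_nonL:
  assumes aL: "\<alpha> \<notin> L" shows "card (S \<inter> (\<lambda>x. \<alpha> * x) ` S) = q ^ (t * l - 1)"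
proof -
  have anz: "\<alpha> \<noteq> 0" using aL sf_0[OF sfL] by auto
  define V where "V = (\<lambda>x. \<alpha> * x) ` S"
  have VK: "is_subspace Fq V" unfolding V_def by (rule ss_image_mult[OF SK])
  define d where "d = dim_over Fq (S \<inter> V)"
  have cd: "card (S \<inter> V) = q ^ d" using dim_card[OF Fq_sub ss_Int[OF SK VK]] d_def Fq_card by simp
  have "d \<le> t * l - 1" using card_int_nonL_le[OF aL] cd V_def powq_le by simp
  moreover have "\<not> d < t * l - 1"
  proof
    assume dlt: "d < t * l - 1"
    define i where "i = k - d"
    have dk: "d \<le> k" using dlt k_def by simp
    have "i \<in> {k - r + 1..k}" using dlt r_val(2) k_def unfolding i_def by auto
    hence w0: "weight Fq k S i = 0" using FWS unfolding is_FWS_def by blast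
    have "V \<in> {V \<in> Orb S. subspace_dist Fq k S V = 2 * i}"
      using orb_mem[OF anz] dist_eq[OF VK cd dk] V_def i_def by simp
    hence "{V \<in> Orb S. subspace_dist Fq k S V = 2 * i} \<noteq> {}" by blast
    hence "weight Fq k S i \<noteq> 0" unfolding weight_def by simp
    thus False using w0 by simp
  qed
  ultimately have "d = t * l - 1" by simp
  thus ?thesis using cd V_def by simp
qed


definition iota :: "'a \<Rightarrow> nat" where
  "iota \<alpha> = (if \<alpha> \<in> L then cls Fq lam m \<alpha> else m + 1)"

lemma iota_le: "iota \<alpha> \<le> m + 1" unfolding iota_def using cls_le[OF Fq_sub cardLK, of m \<alpha>] by simp
lemma mk: "m + 1 \<le> k" using k_def m_bounds l_pos
  by (metis add.commute add_le_mono1 less_imp_le_nat mult_le_mono2 nat_mult_1_right Suc_leI One_nat_def le_trans less_eq_Suc_le)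

lemma card_int: "\<alpha> \<noteq> 0 \<Longrightarrow> card (S \<inter> (\<lambda>x. \<alpha> * x) ` S) = q ^ (k - iota \<alpha>)"
  using card_int_L card_int_nonL k_def unfolding iota_def by auto

lemma dist_iota: "\<alpha> \<noteq> 0 \<Longrightarrow> subspace_dist Fq k S ((\<lambda>x. \<alpha> * x) ` S) = 2 * iota \<alpha>"
proof -
  assume anz: "\<alpha> \<noteq> 0"
  have "iota \<alpha> \<le> k" using iota_le mk le_trans by blast
  thus ?thesis using dist_eq[OF ss_image_mult[OF SK] card_int[OF anz]] by simp
qed

lemma stab: assumes gnz: "\<gamma> \<noteq> 0" shows "(\<lambda>x. \<gamma> * x) ` S = S \<longleftrightarrow> \<gamma> \<in> Fq"
proof
  assume "\<gamma> \<in> Fq"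
  hence "(\<lambda>x. \<gamma> * x) ` S \<subseteq> S" using SK unfolding is_subspace_def by blast
  moreover have "card ((\<lambda>x. \<gamma> * x) ` S) = card S" using card_mult_image_eq gnz by blast
  ultimately show "(\<lambda>x. \<gamma> * x) ` S = S" by (intro card_subset_eq) auto
next
  assume eq: "(\<lambda>x. \<gamma> * x) ` S = S"
  have "q ^ k = q ^ (k - iota \<gamma>)" using card_int[OF gnz] eq cardS by simp
  hence "iota \<gamma> = 0" using powq_inj iota_le mk by simp
  hence gL: "\<gamma> \<in> L" and c0: "cls Fq lam m \<gamma> = 0" unfolding iota_def by (auto split: if_splits)
  have ex: "\<exists>j<m. good Fq lam \<gamma> j"
  proof (rule ccontr)
    assume "\<not> (\<exists>j<m. good Fq lam \<gamma> j)"
    hence "cls Fq lam m \<gamma> = m" unfolding cls_def by (rule if_not_P)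
    thus False using c0 m_bounds by simp
  qed
  hence "(LEAST j. good Fq lam \<gamma> j) = 0" using c0 unfolding cls_def by simp
  hence "good Fq lam \<gamma> 0" using ex LeastI_ex[of "good Fq lam \<gamma>"] by auto
  then obtain v where v: "v \<in> Fq" "v \<noteq> 0" "\<gamma> * v \<in> Fq" unfolding good_def using W1[OF Fq_sub] by auto
  have "\<gamma> = (\<gamma> * v) / v" using v(2) by simp
  thus "\<gamma> \<in> Fq" using sf_divide[OF Fq_sub v(3) v(1)] by simp
qed

lemma same_orbit:
  assumes anz: "\<alpha> \<noteq> 0" and bnz: "\<beta> \<noteq> 0"
  shows "(\<lambda>x. \<beta> * x) ` S = (\<lambda>x. \<alpha> * x) ` S \<longleftrightarrow> \<beta> / \<alpha> \<in> Fq"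
proof -
  have "(\<lambda>x. \<beta> * x) ` S = (\<lambda>x. \<alpha> * x) ` ((\<lambda>x. (\<beta> / \<alpha>) * x) ` S)"
    unfolding image_image using anz by (intro image_cong refl) simp
  moreover have "inj (\<lambda>x. \<alpha> * x)" using anz by (intro injI) simp
  ultimately have "(\<lambda>x. \<beta> * x) ` S = (\<lambda>x. \<alpha> * x) ` S \<longleftrightarrow> (\<lambda>x. (\<beta> / \<alpha>) * x) ` S = S"
    by (simp add: inj_image_eq_iff)
  also have "\<dots> \<longleftrightarrow> \<beta> / \<alpha> \<in> Fq" by (rule stab) (use anz bnz in simp)
  finally show ?thesis .
qed

definition Aset :: "nat \<Rightarrow> 'a set" where "Aset i = {\<alpha>. \<alpha> \<noteq> 0 \<and> iota \<alpha> = i}"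

lemma weight_img: "weight Fq k S i = card ((\<lambda>\<alpha>. (\<lambda>x. \<alpha> * x) ` S) ` Aset i)"
proof -
  have "{V \<in> Orb S. subspace_dist Fq k S V = 2 * i} = (\<lambda>\<alpha>. (\<lambda>x. \<alpha> * x) ` S) ` Aset i"
  proof
    show "{V \<in> Orb S. subspace_dist Fq k S V = 2 * i} \<subseteq> (\<lambda>\<alpha>. (\<lambda>x. \<alpha> * x) ` S) ` Aset i"
    proof
      fix V assume "V \<in> {V \<in> Orb S. subspace_dist Fq k S V = 2 * i}"
      then obtain \<alpha> where a: "\<alpha> \<noteq> 0" "V = (\<lambda>x. \<alpha> * x) ` S" "subspace_dist Fq k S V = 2 * i"
        unfolding Orb_def by blast
      hence "iota \<alpha> = i" using dist_iota by simp
      thus "V \<in> (\<lambda>\<alpha>. (\<lambda>x. \<alpha> * x) ` S) ` Aset i" unfolding Aset_def using a by blast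
    qed
  next
    show "(\<lambda>\<alpha>. (\<lambda>x. \<alpha> * x) ` S) ` Aset i \<subseteq> {V \<in> Orb S. subspace_dist Fq k S V = 2 * i}"
      unfolding Aset_def using orb_mem dist_iota by auto
  qed
  thus ?thesis unfolding weight_def by simp
qed

lemma weight_mult: "card (Aset i) = weight Fq k S i * (q - 1)"
proof -
  let ?f = "\<lambda>\<alpha>. (\<lambda>x. \<alpha> * x) ` S"
  have "card (Aset i) = card (?f ` Aset i) * (q - 1)"
  proof (rule fiber_count)
    fix V assume "V \<in> ?f ` Aset i"
    then obtain \<alpha>0 where a0: "\<alpha>0 \<in> Aset i" "V = ?f \<alpha>0" by blast
    have a0nz: "\<alpha>0 \<noteq> 0" using a0 unfolding Aset_def by simp
    have "{\<alpha> \<in> Aset i. ?f \<alpha> = V} = (\<lambda>\<gamma>. \<gamma> * \<alpha>0) ` (Fq - {0})"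
    proof
      show "{\<alpha> \<in> Aset i. ?f \<alpha> = V} \<subseteq> (\<lambda>\<gamma>. \<gamma> * \<alpha>0) ` (Fq - {0})"
      proof
        fix \<alpha> assume a: "\<alpha> \<in> {\<alpha> \<in> Aset i. ?f \<alpha> = V}"
        hence anz: "\<alpha> \<noteq> 0" unfolding Aset_def by simp
        hence "\<alpha> / \<alpha>0 \<in> Fq" using same_orbit[OF a0nz anz] a a0 by simp
        moreover have "\<alpha> / \<alpha>0 \<noteq> 0" using anz a0nz by simp
        moreover have "\<alpha> = (\<alpha> / \<alpha>0) * \<alpha>0" using a0nz by simp
        ultimately show "\<alpha> \<in> (\<lambda>\<gamma>. \<gamma> * \<alpha>0) ` (Fq - {0})" by blast
      qed
    next
      show "(\<lambda>\<gamma>. \<gamma> * \<alpha>0) ` (Fq - {0}) \<subseteq> {\<alpha> \<in> Aset i. ?f \<alpha> = V}"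
      proof
        fix \<alpha> assume "\<alpha> \<in> (\<lambda>\<gamma>. \<gamma> * \<alpha>0) ` (Fq - {0})"
        then obtain \<gamma> where g: "\<gamma> \<in> Fq" "\<gamma> \<noteq> 0" "\<alpha> = \<gamma> * \<alpha>0" by blast
        have anz: "\<alpha> \<noteq> 0" using g a0nz by simp
        have "\<alpha> / \<alpha>0 \<in> Fq" using g a0nz by simp
        hence fe: "?f \<alpha> = ?f \<alpha>0" using same_orbit[OF a0nz anz] by simp
        have "q ^ (k - iota \<alpha>) = q ^ (k - iota \<alpha>0)" using card_int[OF anz] card_int[OF a0nz] fe by simp
        hence "k - iota \<alpha> = k - iota \<alpha>0" using powq_inj by simp
        hence "iota \<alpha> = iota \<alpha>0" using iota_le[of \<alpha>] iota_le[of \<alpha>0] mk by simp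
        thus "\<alpha> \<in> {\<alpha> \<in> Aset i. ?f \<alpha> = V}" using a0 anz fe unfolding Aset_def by simp
      qed
    qed
    also have "card \<dots> = card (Fq - {0})" using a0nz by (intro card_image inj_onI) auto
    also have "\<dots> = q - 1" using Fq_card sf_0[OF Fq_sub] by simp
    finally show "card {\<alpha> \<in> Aset i. ?f \<alpha> = V} = q - 1" .
  qed simp
  thus ?thesis using weight_img by simp
qed


lemma A_nonL: "Aset (m + 1) = UNIV - L"
proof
  show "Aset (m + 1) \<subseteq> UNIV - L"
  proof
    fix \<alpha> assume "\<alpha> \<in> Aset (m + 1)"
    hence "iota \<alpha> = m + 1" unfolding Aset_def by simp
    thus "\<alpha> \<in> UNIV - L" unfolding iota_def using cls_le[OF Fq_sub cardLK, of m \<alpha>]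
      by (cases "\<alpha> \<in> L") auto
  qed
next
  show "UNIV - L \<subseteq> Aset (m + 1)"
    unfolding Aset_def iota_def using sf_0[OF sfL] by auto
qed

lemma A_L: "1 \<le> i \<Longrightarrow> i \<le> m \<Longrightarrow> Aset i = {\<alpha> \<in> L - {0}. cls Fq lam m \<alpha> = i}"
  unfolding Aset_def iota_def by auto

definition cc :: "nat \<Rightarrow> nat" where "cc j = card {\<alpha> \<in> L - {0}. cls Fq lam m \<alpha> = j}"

lemma c_eqs: "1 \<le> N \<Longrightarrow> N \<le> m \<Longrightarrow> (\<Sum>j<N. cc j * (q^(N-j) - 1)) = (q^N - 1) * (q^N - 1)"
  using group_count[OF Fq_sub cardLK _ _ mt] Fq_card unfolding cc_def by simp

lemma c_val: "j < m \<Longrightarrow> real (cc j) = Cf (real q) j"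
  by (rule solve_counts[OF q2 c_eqs])

lemma c_sum: "(\<Sum>j\<le>m. cc j) = q ^ t - 1"
proof -
  have "card (L - {0}) = (\<Sum>\<alpha>\<in>L - {0}. 1)" by simp
  also have "\<dots> = (\<Sum>j\<in>{..m}. (\<Sum>\<alpha>\<in>{\<alpha> \<in> L - {0}. cls Fq lam m \<alpha> = j}. 1))"
    by (rule sum.group[symmetric]) (auto intro: cls_le[OF Fq_sub cardLK])
  also have "\<dots> = (\<Sum>j\<le>m. cc j)" unfolding cc_def by simp
  finally show ?thesis using cardL sf_0[OF sfL] by simp
qed

lemma tn: "t \<le> n" using n_eq by simp

lemma main_result:
  "(\<forall>i\<in>{1..m - 1}. real (weight Fq k S i) = (real q + 1) * real q ^ (2 * i - 1))
    \<and> real (weight Fq k S m) = (real q ^ t - real q ^ (2 * m - 1)) / (real q - 1)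
    \<and> real (weight Fq k S (m + 1)) = (real q ^ n - real q ^ t) / (real q - 1)"
proof -
  have qr: "real q - 1 \<noteq> 0" using q2 by simp
  have wr: "real (card (Aset i)) = real (weight Fq k S i) * (real q - 1)" for i
    using weight_mult[of i] q2 by (simp add: of_nat_diff)
  have part1: "real (weight Fq k S i) = (real q + 1) * real q ^ (2 * i - 1)" if i: "i \<in> {1..m - 1}" for i
  proof -
    have i1: "1 \<le> i" "i \<le> m" using i by auto
    have "Aset i = {\<alpha> \<in> L - {0}. cls Fq lam m \<alpha> = i}" by (rule A_L[OF i1])
    hence "real (card (Aset i)) = real (cc i)" unfolding cc_def by simp
    also have "\<dots> = (real q ^ 2 - 1) * real q ^ (2 * i - 1)" using c_val[of i] i unfolding Cf_def by auto
    finally have "real (weight Fq k S i) * (real q - 1) = ((real q + 1) * real q ^ (2 * i - 1)) * (real q - 1)"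
      using wr by (simp add: algebra_simps power2_eq_square)
    thus ?thesis using qr by simp
  qed
  have part2: "real (weight Fq k S m) = (real q ^ t - real q ^ (2 * m - 1)) / (real q - 1)"
  proof -
    have "real (\<Sum>j\<le>m. cc j) = real (q ^ t - 1)" using c_sum by simp
    hence "(\<Sum>j<m. real (cc j)) + real (cc m) = real q ^ t - 1"
      using q2 by (simp add: of_nat_diff lessThan_Suc_atMost[symmetric])
    moreover have "(\<Sum>j<m. real (cc j)) = (\<Sum>j<m. Cf (real q) j)" using c_val by simp
    moreover have "(\<Sum>j<m. Cf (real q) j) = real q ^ (2 * m - 1) - 1"
    proof -
      have e: "2 * (m - 1) + 1 = 2 * m - 1" "Suc (m - 1) = m" using m_bounds by auto
      show ?thesis using Cf_G[of "real q" "m - 1"] unfolding e .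
    qed
    ultimately have "real (cc m) = real q ^ t - real q ^ (2 * m - 1)" by simp
    moreover have "Aset m = {\<alpha> \<in> L - {0}. cls Fq lam m \<alpha> = m}" using A_L[of m] m_bounds by simp
    hence "real (card (Aset m)) = real (cc m)" unfolding cc_def by simp
    ultimately have "real (weight Fq k S m) * (real q - 1) = real q ^ t - real q ^ (2 * m - 1)" using wr by simp
    thus ?thesis using qr by (simp add: field_simps)
  qed
  have part3: "real (weight Fq k S (m + 1)) = (real q ^ n - real q ^ t) / (real q - 1)"
  proof -
    have "card (Aset (m + 1)) = q ^ n - q ^ t" unfolding A_nonL
      using card_field cardL by (simp add: card_Diff_subset)
    moreover have "q ^ t \<le> q ^ n" using tn powq_le by simp
    ultimately have "real (card (Aset (m + 1))) = real q ^ n - real q ^ t" by (simp add: of_nat_diff)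
    hence "real (weight Fq k S (m + 1)) * (real q - 1) = real q ^ n - real q ^ t" using wr by simp
    thus ?thesis using qr by (simp add: field_simps)
  qed
  show ?thesis using part1 part2 part3 by blast
qed

end

theorem theorem4p10:
  fixes Fq :: "'a::{field,finite} set" and q n t l m k r :: nat
    and lam b :: 'a and Sbar S :: "'a set"
  assumes q_pp: "\<exists>p e. prime p \<and> e > 0 \<and> q = p ^ e"
    and card_field: "card (UNIV :: 'a set) = q ^ n"
    and Fq_sub: "is_subfield Fq" and Fq_card: "card Fq = q"
    and lam: "lam \<notin> Fq"
    and t_def: "t = dim_over Fq (field_adjoin Fq lam)"
    and Sbar_sub: "is_subspace (field_adjoin Fq lam) Sbar"
    and Sbar_dim: "dim_over (field_adjoin Fq lam) Sbar = l" and l_pos: "l > 0"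
    and b_nz: "b \<noteq> 0"
    and b_Sbar: "field_adjoin Fq lam \<inter> (\<lambda>x. b * x) ` Sbar = {0}"
    and m_bounds: "0 < m" "m < t"
    and k_def: "k = t * l + m" and k_bounds: "t + 1 \<le> k" "k \<le> n"
    and S_def: "S = {x + b * w | x w. x \<in> Sbar \<and> w \<in> span_over Fq {lam ^ j | j. j < m}}"
    and S_direct: "Sbar \<inter> (\<lambda>w. b * w) ` span_over Fq {lam ^ j | j. j < m} = {0}"
    and Y_full: "span_over (field_adjoin Fq lam) S = UNIV"
    and m_t: "2 * m + 1 \<ge> t"
    and r_def: "r = 2 * m + t * (l - 1)"
    and FWS: "is_FWS Fq k S r"
    and r_eq: "r = t * l - 1"
  shows "(\<forall>i\<in>{1..m - 1}. real (weight Fq k S i) = (real q + 1) * real q ^ (2 * i - 1))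
    \<and> real (weight Fq k S m) = (real q ^ t - real q ^ (2 * m - 1)) / (real q - 1)
    \<and> real (weight Fq k S (m + 1)) = (real q ^ n - real q ^ t) / (real q - 1)"
    by (rule main_result[OF assms])

end
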